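(* A real symmetric $3\times 3$ matrix $A$ has symmetric Kapranov rank two if and only if it has symmetric tropical rank two.
   Context: Let $\tilde K$ be the field of Hahn series $\sum_{\alpha\in A}c_\alpha t^\alpha$ ($A\subset\mathbb R$ well-ordered, $c_\alpha\in\mathbb C$); for nonzero $a\in\tilde K$, $\deg(a)$ is the smallest exponent with nonzero coefficient. A symmetric lift of a real symmetric matrix $A$ is a symmetric matrix $\tilde A$ over $\tilde K$ with all entries nonzero and $\deg(\tilde a_{i,j})=A_{i,j}$; the symmetric Kapranov rank of $A$ is the minimum rank of a symmetric lift. For an $r\times r$ submatrix of $A$ with row index set $I$ and column index set $J$, each bijection $\rho:I\to J$ gives a monomial $\prod_{i\in I}X_{i,\rho(i)}$ in commuting variables subject to $X_{i,j}=X_{j,i}$, with value $\sum_{i\in I}A_{i,\rho(i)}$; the submatrix is symmetrically tropically singular if the minimum value is attained by at least two distinct monomials. The symmetric tropical rank of $A$ is the largest $r$ such that $A$ has an $r\times r$ submatrix that is not symmetrically tropically singular. *)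

theory Defs
  imports Complex_Main "HOL-Library.Multiset"
begin

definition well_ordered_real :: "real set \<Rightarrow> bool" where
  "well_ordered_real S \<longleftrightarrow> (\<forall>T. T \<subseteq> S \<and> T \<noteq> {} \<longrightarrow> (\<exists>m\<in>T. \<forall>t\<in>T. m \<le> t))"

typedef hahn = "{f :: real \<Rightarrow> complex. well_ordered_real {a. f a \<noteq> 0}}"
  by (rule exI[of _ "\<lambda>_. 0"]) (simp add: well_ordered_real_def)

definition hzero :: hahn where
  "hzero = Abs_hahn (\<lambda>_. 0)"

definition hadd :: "hahn \<Rightarrow> hahn \<Rightarrow> hahn" where
  "hadd f g = Abs_hahn (\<lambda>a. Rep_hahn f a + Rep_hahn g a)"

text \<open>Cauchy product; the sum is finite since both supports are well-ordered.\<close>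
definition hmul :: "hahn \<Rightarrow> hahn \<Rightarrow> hahn" where
  "hmul f g = Abs_hahn (\<lambda>c. \<Sum>a\<in>{a. Rep_hahn f a \<noteq> 0 \<and> Rep_hahn g (c - a) \<noteq> 0}.
                              Rep_hahn f a * Rep_hahn g (c - a))"

text \<open>Degree: smallest exponent with nonzero coefficient (meaningful for nonzero series).\<close>
definition hdeg :: "hahn \<Rightarrow> real" where
  "hdeg f = (LEAST a. Rep_hahn f a \<noteq> 0)"

definition hsum :: "nat \<Rightarrow> (nat \<Rightarrow> hahn) \<Rightarrow> hahn" where
  "hsum r h = foldr hadd (map h [0..<r]) hzero"

text \<open>Matrices are functions on indices 0..n-1. Rank is the least r such that
  the matrix factors as an (n x r) times (r x n) product.\<close>
definition hrank_le :: "nat \<Rightarrow> (nat \<Rightarrow> nat \<Rightarrow> hahn) \<Rightarrow> nat \<Rightarrow> bool" where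
  "hrank_le n M r \<longleftrightarrow> (\<exists>B C :: nat \<Rightarrow> nat \<Rightarrow> hahn.
      \<forall>i<n. \<forall>j<n. M i j = hsum r (\<lambda>k. hmul (B i k) (C k j)))"

definition hrank :: "nat \<Rightarrow> (nat \<Rightarrow> nat \<Rightarrow> hahn) \<Rightarrow> nat" where
  "hrank n M = (LEAST r. hrank_le n M r)"

definition sym_lift :: "nat \<Rightarrow> (nat \<Rightarrow> nat \<Rightarrow> real) \<Rightarrow> (nat \<Rightarrow> nat \<Rightarrow> hahn) \<Rightarrow> bool" where
  "sym_lift n A M \<longleftrightarrow> (\<forall>i<n. \<forall>j<n. M i j = M j i \<and> M i j \<noteq> hzero \<and> hdeg (M i j) = A i j)"

definition sym_kapranov_rank :: "nat \<Rightarrow> (nat \<Rightarrow> nat \<Rightarrow> real) \<Rightarrow> nat" where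
  "sym_kapranov_rank n A = (LEAST r. \<exists>M. sym_lift n A M \<and> hrank n M = r)"

text \<open>Monomial of a bijection rho: I -> J, as a multiset of unordered index pairs
  (encoding X_{i,j} = X_{j,i}), and its value.\<close>
definition sym_monomial :: "nat set \<Rightarrow> (nat \<Rightarrow> nat) \<Rightarrow> nat set multiset" where
  "sym_monomial I \<rho> = image_mset (\<lambda>i. {i, \<rho> i}) (mset_set I)"

definition trop_value :: "(nat \<Rightarrow> nat \<Rightarrow> real) \<Rightarrow> nat set \<Rightarrow> (nat \<Rightarrow> nat) \<Rightarrow> real" where
  "trop_value A I \<rho> = (\<Sum>i\<in>I. A i (\<rho> i))"

definition sym_trop_singular :: "(nat \<Rightarrow> nat \<Rightarrow> real) \<Rightarrow> nat set \<Rightarrow> nat set \<Rightarrow> bool" where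
  "sym_trop_singular A I J \<longleftrightarrow>
     (\<exists>\<rho>1 \<rho>2. bij_betw \<rho>1 I J \<and> bij_betw \<rho>2 I J \<and>
        sym_monomial I \<rho>1 \<noteq> sym_monomial I \<rho>2 \<and>
        trop_value A I \<rho>1 = trop_value A I \<rho>2 \<and>
        (\<forall>\<rho>. bij_betw \<rho> I J \<longrightarrow> trop_value A I \<rho>1 \<le> trop_value A I \<rho>))"

definition sym_trop_rank :: "nat \<Rightarrow> (nat \<Rightarrow> nat \<Rightarrow> real) \<Rightarrow> nat" where
  "sym_trop_rank n A = (GREATEST r. \<exists>I J. I \<subseteq> {..<n} \<and> J \<subseteq> {..<n} \<and>
       card I = r \<and> card J = r \<and> \<not> sym_trop_singular A I J)"

end

theory Submission
  imports Defs
begin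

lemma wo_subset: "well_ordered_real S \<Longrightarrow> T \<subseteq> S \<Longrightarrow> well_ordered_real T"
  unfolding well_ordered_real_def by blast

lemma wo_finite: "finite S \<Longrightarrow> well_ordered_real S"
  unfolding well_ordered_real_def
  by (metis Min_in Min_le finite_subset)

lemma wo_Un: assumes "well_ordered_real S" "well_ordered_real T"
  shows "well_ordered_real (S \<union> T)"
  unfolding well_ordered_real_def
proof (intro allI impI)
  fix U assume U: "U \<subseteq> S \<union> T \<and> U \<noteq> {}"
  show "\<exists>m\<in>U. \<forall>t\<in>U. m \<le> t"
  proof (cases "U \<inter> S = {}")
    case True
    then have "U \<subseteq> T" using U by blast
    then show ?thesis using assms(2) U unfolding well_ordered_real_def by blast
  next
    case F1: False
    obtain m1 where m1: "m1 \<in> U \<inter> S" "\<forall>t\<in>U \<inter> S. m1 \<le> t"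
      using assms(1) F1 unfolding well_ordered_real_def by (metis Int_lower2)
    show ?thesis
    proof (cases "U \<inter> T = {}")
      case True
      then show ?thesis using m1 U by blast
    next
      case False
      obtain m2 where m2: "m2 \<in> U \<inter> T" "\<forall>t\<in>U \<inter> T. m2 \<le> t"
        using assms(2) False unfolding well_ordered_real_def by (metis Int_lower2)
      have "\<forall>t\<in>U. min m1 m2 \<le> t"
      proof
        fix t assume "t \<in> U"
        then have "t \<in> S \<or> t \<in> T" using U by blast
        then show "min m1 m2 \<le> t" using m1 m2 \<open>t \<in> U\<close> by (auto simp: min_le_iff_disj)
      qed
      then show ?thesis using m1 m2 by (cases "m1 \<le> m2") (auto simp: min_def)
    qed
  qed
qed

lemma wo_incseq_sub:
  fixes f :: "nat \<Rightarrow> real"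
  assumes wo: "well_ordered_real S" and f: "\<forall>n. f n \<in> S"
  shows "\<exists>r. strict_mono r \<and> incseq (\<lambda>n. f (r n))"
proof -
  obtain r where r: "strict_mono r" "monoseq (\<lambda>n. f (r n))" using seq_monosub[of f] by blast
  show ?thesis
  proof (cases "incseq (\<lambda>n. f (r n))")
    case True then show ?thesis using r by blast
  next
    case False
    then have dec: "\<forall>m. \<forall>n\<ge>m. f (r n) \<le> f (r m)" using r(2) unfolding monoseq_def incseq_def by blast
    obtain N where N: "f (r N) \<in> range (\<lambda>n. f (r n))" "\<forall>t\<in>range (\<lambda>n. f (r n)). f (r N) \<le> t"
      using wo f unfolding well_ordered_real_def
      by (smt (verit, ccfv_threshold) empty_iff image_iff image_subset_iff rangeI)
    have c: "\<And>n. f (r (n + N)) = f (r N)"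
      using dec N(2) by (meson antisym le_add2 rangeI)
    show ?thesis
      apply (rule exI[of _ "\<lambda>n. r (n + N)"])
      using r(1) c by (auto simp: strict_mono_def incseq_def)
  qed
qed

lemma wo_fiber_finite:
  assumes "well_ordered_real S" "well_ordered_real T"
  shows "finite {a. a \<in> S \<and> c - a \<in> T}"
proof (rule ccontr)
  assume "infinite {a. a \<in> S \<and> c - a \<in> T}"
  then obtain f :: "nat \<Rightarrow> real" where f: "inj f" "range f \<subseteq> {a. a \<in> S \<and> c - a \<in> T}"
    using infinite_countable_subset by blast
  obtain r1 where r1: "strict_mono r1" "incseq (\<lambda>n. f (r1 n))"
    using wo_incseq_sub[OF assms(1), of f] f(2) by blast
  obtain r2 where r2: "strict_mono r2" "incseq (\<lambda>n. c - f (r1 (r2 n)))"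
    using wo_incseq_sub[OF assms(2), of "\<lambda>n. c - f (r1 n)"] f(2) by blast
  have r01: "r2 0 \<le> r2 1" using r2(1) by (simp add: strict_mono_less_eq)
  have "f (r1 (r2 0)) \<le> f (r1 (r2 1))" using monoD[OF r1(2) r01] by simp
  moreover have "c - f (r1 (r2 0)) \<le> c - f (r1 (r2 1))" using monoD[OF r2(2), of 0 1] by simp
  ultimately have "f (r1 (r2 0)) = f (r1 (r2 1))" by simp
  then have "r1 (r2 0) = r1 (r2 1)" using f(1) by (simp add: inj_eq)
  moreover have "r1 (r2 0) < r1 (r2 1)" using r1(1) r2(1) by (simp add: strict_mono_def)
  ultimately show False by simp
qed

lemma not_wo_decseq:
  assumes "\<not> well_ordered_real U"
  shows "\<exists>f. (\<forall>n. f n \<in> U) \<and> (\<forall>n. f (Suc n) < f n)"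
proof -
  obtain V where V: "V \<subseteq> U" "V \<noteq> {}" "\<forall>m\<in>V. \<exists>t\<in>V. t < m"
    using assms unfolding well_ordered_real_def by (auto simp: not_le)
  obtain g where g: "\<forall>m\<in>V. g m \<in> V \<and> g m < m" using V(3) by metis
  obtain v where v: "v \<in> V" using V(2) by blast
  define f where "f n = (g ^^ n) v" for n
  have fV: "f n \<in> V" for n by (induction n) (auto simp: f_def v g)
  show ?thesis
    apply (rule exI[of _ f])
    using fV V(1) g by (auto simp: f_def)
qed

lemma wo_plus:
  assumes "well_ordered_real S" "well_ordered_real T"
  shows "well_ordered_real {a + b | a b. a \<in> S \<and> b \<in> T}"
proof (rule ccontr)
  assume "\<not> ?thesis"
  then obtain s where s: "\<forall>n. s n \<in> {a + b | a b. a \<in> S \<and> b \<in> T}" "\<forall>n. s (Suc n) < s n"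
    using not_wo_decseq by blast
  obtain a b where ab: "\<forall>n. s n = a n + b n \<and> a n \<in> S \<and> b n \<in> T"
    using s(1) by simp metis
  obtain r1 where r1: "strict_mono r1" "incseq (\<lambda>n. a (r1 n))"
    using wo_incseq_sub[OF assms(1), of a] ab by blast
  obtain r2 where r2: "strict_mono r2" "incseq (\<lambda>n. b (r1 (r2 n)))"
    using wo_incseq_sub[OF assms(2), of "\<lambda>n. b (r1 n)"] ab by blast
  have r01: "r2 0 \<le> r2 1" using r2(1) by (simp add: strict_mono_less_eq)
  have "a (r1 (r2 0)) \<le> a (r1 (r2 1))" using monoD[OF r1(2) r01] by simp
  moreover have "b (r1 (r2 0)) \<le> b (r1 (r2 1))" using monoD[OF r2(2), of 0 1] by simp
  ultimately have le: "s (r1 (r2 0)) \<le> s (r1 (r2 1))" using ab by simp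
  have lt: "r1 (r2 0) < r1 (r2 1)" using r1(1) r2(1) by (simp add: strict_mono_def)
  have "\<And>m n. m < n \<Longrightarrow> - s m < - s n"
    by (rule lift_Suc_mono_less[where f="\<lambda>n. - s n"]) (use s(2) in auto)
  from this[OF lt] le show False by simp
qed

lemma Rep_wo: "well_ordered_real {a. Rep_hahn x a \<noteq> 0}"
  using Rep_hahn[of x] by simp

lemma Abs_inv: "well_ordered_real {a. f a \<noteq> 0} \<Longrightarrow> Rep_hahn (Abs_hahn f) = f"
  by (simp add: Abs_hahn_inverse)

definition conv :: "(real \<Rightarrow> complex) \<Rightarrow> (real \<Rightarrow> complex) \<Rightarrow> real \<Rightarrow> complex" where
  "conv F G c = (\<Sum>a\<in>{a. F a \<noteq> 0 \<and> G (c - a) \<noteq> 0}. F a * G (c - a))"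

lemma fib_finite:
  assumes "well_ordered_real {a. F a \<noteq> 0}" "well_ordered_real {a. G a \<noteq> 0}"
  shows "finite {a. F a \<noteq> 0 \<and> G (c - a) \<noteq> 0}"
  using wo_fiber_finite[OF assms, of c] by simp

lemma conv_supp:
  "{c. conv F G c \<noteq> 0} \<subseteq> {a + b | a b. a \<in> {a. F a \<noteq> 0} \<and> b \<in> {b. G b \<noteq> 0}}"
proof
  fix c assume "c \<in> {c. conv F G c \<noteq> 0}"
  then have "conv F G c \<noteq> 0" by simp
  then have "{a. F a \<noteq> 0 \<and> G (c - a) \<noteq> 0} \<noteq> {}" unfolding conv_def
    by (rule contrapos_nn) (simp only: sum.empty)
  then obtain a where "F a \<noteq> 0" "G (c - a) \<noteq> 0" by blast
  then show "c \<in> {a + b | a b. a \<in> {a. F a \<noteq> 0} \<and> b \<in> {b. G b \<noteq> 0}}"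
    by (intro CollectI exI[of _ a] exI[of _ "c - a"]) auto
qed

lemma wo_conv:
  assumes "well_ordered_real {a. F a \<noteq> 0}" "well_ordered_real {a. G a \<noteq> 0}"
  shows "well_ordered_real {c. conv F G c \<noteq> 0}"
  using wo_subset[OF wo_plus[OF assms] conv_supp] .

lemma conv_superset:
  assumes "finite X" "{a. F a \<noteq> 0 \<and> G (c - a) \<noteq> 0} \<subseteq> X"
  shows "conv F G c = (\<Sum>a\<in>X. F a * G (c - a))"
  unfolding conv_def
  by (rule sum.mono_neutral_left[OF assms]) auto

lemma conv_comm: "conv F G c = conv G F c"
  unfolding conv_def
  by (rule sum.reindex_bij_witness[of _ "\<lambda>a. c - a" "\<lambda>a. c - a"]) (auto simp: mult.commute)

lemma conv_assoc:
  assumes wF: "well_ordered_real {a. F a \<noteq> 0}" and wG: "well_ordered_real {a. G a \<noteq> 0}"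
    and wH: "well_ordered_real {a. H a \<noteq> 0}"
  shows "conv (conv F G) H c = conv F (conv G H) c"
proof -
  define S where "S = {a + b | a b. a \<in> {a. F a \<noteq> 0} \<and> b \<in> {b. G b \<noteq> 0}}"
  define S' where "S' = {a + b | a b. a \<in> {a. G a \<noteq> 0} \<and> b \<in> {b. H b \<noteq> 0}}"
  have wS: "well_ordered_real S" unfolding S_def by (rule wo_plus[OF wF wG])
  have wS': "well_ordered_real S'" unfolding S'_def by (rule wo_plus[OF wG wH])
  define X0 where "X0 = {x. x \<in> S \<and> c - x \<in> {a. H a \<noteq> 0}}"
  define Y0 where "Y0 = {a. a \<in> {a. F a \<noteq> 0} \<and> c - a \<in> S'}"
  have fX0: "finite X0" unfolding X0_def by (rule wo_fiber_finite[OF wS wH])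
  have fY0: "finite Y0" unfolding Y0_def by (rule wo_fiber_finite[OF wF wS'])
  define fib where "fib x = {a. F a \<noteq> 0 \<and> G (x - a) \<noteq> 0}" for x
  define fib2 where "fib2 x = {b. G b \<noteq> 0 \<and> H (x - b) \<noteq> 0}" for x
  have ffib: "finite (fib x)" for x unfolding fib_def by (rule fib_finite[OF wF wG])
  have ffib2: "finite (fib2 x)" for x unfolding fib2_def by (rule fib_finite[OF wG wH])
  define U where "U = {(a, b). F a \<noteq> 0 \<and> G b \<noteq> 0 \<and> H (c - a - b) \<noteq> 0}"
  have "conv (conv F G) H c = (\<Sum>x\<in>X0. conv F G x * H (c - x))"
  proof (rule conv_superset[OF fX0])
    show "{a. conv F G a \<noteq> 0 \<and> H (c - a) \<noteq> 0} \<subseteq> X0"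
      using conv_supp[of F G] unfolding X0_def S_def by blast
  qed
  also have "\<dots> = (\<Sum>x\<in>X0. \<Sum>a\<in>fib x. F a * G (x - a) * H (c - x))"
    unfolding conv_def fib_def by (simp add: sum_distrib_right)
  also have "\<dots> = (\<Sum>p\<in>Sigma X0 fib. F (snd p) * G (fst p - snd p) * H (c - fst p))"
    by (subst sum.Sigma[OF fX0]) (auto simp: ffib case_prod_beta)
  also have "\<dots> = (\<Sum>p\<in>U. F (fst p) * G (snd p) * H (c - fst p - snd p))"
  proof (rule sum.reindex_bij_witness[of _ "\<lambda>(a, b). (a + b, a)" "\<lambda>(x, a). (a, x - a)"])
    show "\<And>p. p \<in> Sigma X0 fib \<Longrightarrow> (case case p of (x, a) \<Rightarrow> (a, x - a) of (a, b) \<Rightarrow> (a + b, a)) = p"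
      by auto
    show "\<And>p. p \<in> Sigma X0 fib \<Longrightarrow> (case p of (x, a) \<Rightarrow> (a, x - a)) \<in> U"
      unfolding X0_def fib_def U_def by auto
    show "\<And>p. p \<in> U \<Longrightarrow> (case case p of (a, b) \<Rightarrow> (a + b, a) of (x, a) \<Rightarrow> (a, x - a)) = p"
      by auto
    show "(case p of (a, b) \<Rightarrow> (a + b, a)) \<in> Sigma X0 fib" if "p \<in> U" for p
    proof -
      obtain a b where p0: "p = (a, b)" by (cases p)
      have p: "p = (a, b)" "F a \<noteq> 0" "G b \<noteq> 0" "H (c - a - b) \<noteq> 0"
        using that p0 unfolding U_def by auto
      have "a + b \<in> S" unfolding S_def using p by blast
      then show ?thesis unfolding X0_def fib_def using p by (simp add: algebra_simps)
    qed
    show "\<And>p. p \<in> Sigma X0 fib \<Longrightarrow>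
         F (fst (case p of (x, a) \<Rightarrow> (a, x - a))) * G (snd (case p of (x, a) \<Rightarrow> (a, x - a))) *
         H (c - fst (case p of (x, a) \<Rightarrow> (a, x - a)) - snd (case p of (x, a) \<Rightarrow> (a, x - a))) =
         F (snd p) * G (fst p - snd p) * H (c - fst p)"
      by (auto simp: algebra_simps)
  qed
  finally have L: "conv (conv F G) H c = (\<Sum>p\<in>U. F (fst p) * G (snd p) * H (c - fst p - snd p))" .
  have "conv F (conv G H) c = (\<Sum>a\<in>Y0. F a * conv G H (c - a))"
  proof (rule conv_superset[OF fY0])
    show "{a. F a \<noteq> 0 \<and> conv G H (c - a) \<noteq> 0} \<subseteq> Y0"
      using conv_supp[of G H] unfolding Y0_def S'_def by blast
  qed
  also have "\<dots> = (\<Sum>a\<in>Y0. \<Sum>b\<in>fib2 (c - a). F a * (G b * H (c - a - b)))"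
    unfolding conv_def fib2_def by (simp add: sum_distrib_left)
  also have "\<dots> = (\<Sum>p\<in>Sigma Y0 (\<lambda>a. fib2 (c - a)). F (fst p) * (G (snd p) * H (c - fst p - snd p)))"
    by (subst sum.Sigma[OF fY0]) (auto simp: ffib2 case_prod_beta)
  also have "Sigma Y0 (\<lambda>a. fib2 (c - a)) = U"
  proof (intro set_eqI iffI)
    fix p assume "p \<in> Sigma Y0 (\<lambda>a. fib2 (c - a))"
    then show "p \<in> U" unfolding Y0_def fib2_def U_def by (auto simp: algebra_simps)
  next
    fix p assume "p \<in> U"
    then obtain a b where p: "p = (a, b)" "F a \<noteq> 0" "G b \<noteq> 0" "H (c - a - b) \<noteq> 0"
      unfolding U_def by auto
    have "c - a \<in> S'" unfolding S'_def using p
      by (intro CollectI exI[of _ b] exI[of _ "c - a - b"]) auto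
    then show "p \<in> Sigma Y0 (\<lambda>a. fib2 (c - a))" unfolding Y0_def fib2_def using p
      by (auto simp: algebra_simps)
  qed
  finally have R: "conv F (conv G H) c = (\<Sum>p\<in>U. F (fst p) * (G (snd p) * H (c - fst p - snd p)))" .
  show ?thesis by (simp only: L R mult.assoc)
qed

lemma conv_one: "conv F (\<lambda>a. if a = 0 then 1 else 0) c = F c"
proof -
  have "{a. F a \<noteq> 0 \<and> (if c - a = 0 then 1 else 0) \<noteq> (0::complex)} = (if F c \<noteq> 0 then {c} else {})"
    by auto
  then show ?thesis unfolding conv_def by auto
qed

lemma conv_distrib:
  assumes wF: "well_ordered_real {a. F a \<noteq> 0}" and wG: "well_ordered_real {a. G a \<noteq> 0}"
    and wH: "well_ordered_real {a. H a \<noteq> 0}"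
  shows "conv (\<lambda>a. F a + G a) H c = conv F H c + conv G H c"
proof -
  have wFG: "well_ordered_real {a. F a + G a \<noteq> 0}"
    by (rule wo_subset[OF wo_Un[OF wF wG]]) auto
  define X where "X = {a. F a \<noteq> 0 \<and> H (c - a) \<noteq> 0} \<union> {a. G a \<noteq> 0 \<and> H (c - a) \<noteq> 0}
     \<union> {a. F a + G a \<noteq> 0 \<and> H (c - a) \<noteq> 0}"
  have fX: "finite X" unfolding X_def
    using fib_finite[OF wF wH] fib_finite[OF wG wH] fib_finite[OF wFG wH] by blast
  have "conv (\<lambda>a. F a + G a) H c = (\<Sum>a\<in>X. (F a + G a) * H (c - a))"
    by (rule conv_superset[OF fX]) (auto simp: X_def)
  also have "\<dots> = (\<Sum>a\<in>X. F a * H (c - a)) + (\<Sum>a\<in>X. G a * H (c - a))"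
    by (simp add: distrib_right sum.distrib)
  also have "(\<Sum>a\<in>X. F a * H (c - a)) = conv F H c"
    by (rule conv_superset[OF fX, symmetric]) (auto simp: X_def)
  also have "(\<Sum>a\<in>X. G a * H (c - a)) = conv G H c"
    by (rule conv_superset[OF fX, symmetric]) (auto simp: X_def)
  finally show ?thesis .
qed

instantiation hahn :: comm_ring_1
begin

definition zero_hahn_def: "0 = hzero"
definition one_hahn_def: "1 = Abs_hahn (\<lambda>a. if a = 0 then 1 else 0)"
definition plus_hahn_def: "x + y = hadd x y"
definition times_hahn_def: "x * y = hmul x y"
definition uminus_hahn_def: "- x = Abs_hahn (\<lambda>a. - Rep_hahn x a)"
definition minus_hahn_def: "x - y = Abs_hahn (\<lambda>a. Rep_hahn x a - Rep_hahn y a)"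

lemma Rep_zero: "Rep_hahn 0 = (\<lambda>_. 0)"
  unfolding zero_hahn_def hzero_def by (rule Abs_inv) (simp add: well_ordered_real_def)

lemma Rep_one: "Rep_hahn 1 = (\<lambda>a. if a = 0 then 1 else 0)"
  unfolding one_hahn_def by (rule Abs_inv, rule wo_finite) (rule finite_subset[of _ "{0}"], auto)

lemma Rep_plus: "Rep_hahn (x + y) = (\<lambda>a. Rep_hahn x a + Rep_hahn y a)"
  unfolding plus_hahn_def hadd_def
  by (rule Abs_inv, rule wo_subset[OF wo_Un[OF Rep_wo[of x] Rep_wo[of y]]]) auto

lemma Rep_uminus: "Rep_hahn (- x) = (\<lambda>a. - Rep_hahn x a)"
  unfolding uminus_hahn_def
  by (rule Abs_inv) (simp add: Rep_wo)

lemma Rep_minus: "Rep_hahn (x - y) = (\<lambda>a. Rep_hahn x a - Rep_hahn y a)"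
  unfolding minus_hahn_def
  by (rule Abs_inv, rule wo_subset[OF wo_Un[OF Rep_wo[of x] Rep_wo[of y]]]) auto

lemma Rep_times: "Rep_hahn (x * y) = conv (Rep_hahn x) (Rep_hahn y)"
proof -
  have "x * y = Abs_hahn (conv (Rep_hahn x) (Rep_hahn y))"
    unfolding times_hahn_def hmul_def conv_def[abs_def] by simp
  then show ?thesis using Abs_inv[OF wo_conv[OF Rep_wo[of x] Rep_wo[of y]]] by simp
qed

instance
proof
  fix a b c :: hahn
  show "a + b + c = a + (b + c)"
    by (simp add: Rep_hahn_inject[symmetric] Rep_plus fun_eq_iff add.assoc)
  show "a + b = b + a"
    by (simp add: Rep_hahn_inject[symmetric] Rep_plus fun_eq_iff add.commute)
  show "0 + a = a"
    by (simp add: Rep_hahn_inject[symmetric] Rep_plus Rep_zero fun_eq_iff)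
  show "- a + a = 0"
    by (simp add: Rep_hahn_inject[symmetric] Rep_plus Rep_zero Rep_uminus fun_eq_iff)
  show "a - b = a + - b"
    by (simp add: Rep_hahn_inject[symmetric] Rep_plus Rep_minus Rep_uminus fun_eq_iff)
  show "a * b * c = a * (b * c)"
    by (simp add: Rep_hahn_inject[symmetric] Rep_times fun_eq_iff conv_assoc Rep_wo)
  show "a * b = b * a"
    by (simp add: Rep_hahn_inject[symmetric] Rep_times fun_eq_iff conv_comm[of "Rep_hahn a"])
  show "1 * a = a"
    by (simp add: Rep_hahn_inject[symmetric] Rep_times Rep_one fun_eq_iff
        conv_comm[of "\<lambda>a. if a = 0 then 1 else 0"] conv_one)
  show "(a + b) * c = a * c + b * c"
    by (simp add: Rep_hahn_inject[symmetric] Rep_times Rep_plus fun_eq_iff conv_distrib Rep_wo)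
  show "(0::hahn) \<noteq> 1"
  proof
    assume "(0::hahn) = 1"
    then have "Rep_hahn 0 0 = Rep_hahn 1 0" by simp
    then show False by (simp add: Rep_zero Rep_one)
  qed
qed

end

lemma hzero_eq: "hzero = 0" by (simp add: zero_hahn_def)
lemma hadd_eq: "hadd x y = x + y" by (simp add: plus_hahn_def)
lemma hmul_eq: "hmul x y = x * y" by (simp add: times_hahn_def)

lemma nonzero_Rep: "x \<noteq> 0 \<longleftrightarrow> (\<exists>a. Rep_hahn x a \<noteq> 0)"
  by (metis Rep_hahn_inverse Rep_zero fun_eq_iff)

lemma hdeg_props:
  assumes "x \<noteq> 0"
  shows "Rep_hahn x (hdeg x) \<noteq> 0" "\<And>a. a < hdeg x \<Longrightarrow> Rep_hahn x a = 0"
proof -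
  have ne: "{a. Rep_hahn x a \<noteq> 0} \<noteq> {}" using assms nonzero_Rep by auto
  obtain m where m: "m \<in> {a. Rep_hahn x a \<noteq> 0}" "\<forall>t\<in>{a. Rep_hahn x a \<noteq> 0}. m \<le> t"
    using Rep_wo[of x] ne unfolding well_ordered_real_def by blast
  have h: "hdeg x = m" unfolding hdeg_def
    by (rule Least_equality) (use m in auto)
  show "Rep_hahn x (hdeg x) \<noteq> 0" using m h by simp
  show "\<And>a. a < hdeg x \<Longrightarrow> Rep_hahn x a = 0" using m h by force
qed

lemma hdeg_eqI:
  assumes "Rep_hahn x e \<noteq> 0" "\<And>a. a < e \<Longrightarrow> Rep_hahn x a = 0"
  shows "x \<noteq> 0" "hdeg x = e"
proof -
  show "x \<noteq> 0" using assms(1) nonzero_Rep by auto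
  show "hdeg x = e" unfolding hdeg_def
    by (rule Least_equality) (use assms in \<open>auto simp: not_le[symmetric]\<close>)
qed

lemma mult_lead:
  assumes "x \<noteq> 0" "y \<noteq> 0"
  shows "Rep_hahn (x * y) (hdeg x + hdeg y) = Rep_hahn x (hdeg x) * Rep_hahn y (hdeg y)"
    "\<And>e. e < hdeg x + hdeg y \<Longrightarrow> Rep_hahn (x * y) e = 0"
proof -
  note hx = hdeg_props[OF assms(1)] and hy = hdeg_props[OF assms(2)]
  have "{a. Rep_hahn x a \<noteq> 0 \<and> Rep_hahn y (hdeg x + hdeg y - a) \<noteq> 0} = {hdeg x}"
  proof (intro set_eqI iffI)
    fix a assume a: "a \<in> {a. Rep_hahn x a \<noteq> 0 \<and> Rep_hahn y (hdeg x + hdeg y - a) \<noteq> 0}"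
    then have "\<not> a < hdeg x" "\<not> hdeg x + hdeg y - a < hdeg y" using hx(2) hy(2) by auto
    then show "a \<in> {hdeg x}" by simp
  qed (use hx hy in auto)
  then show "Rep_hahn (x * y) (hdeg x + hdeg y) = Rep_hahn x (hdeg x) * Rep_hahn y (hdeg y)"
    by (simp add: Rep_times conv_def)
  fix e assume e: "e < hdeg x + hdeg y"
  have "{a. Rep_hahn x a \<noteq> 0 \<and> Rep_hahn y (e - a) \<noteq> 0} = {}"
  proof (intro set_eqI iffI)
    fix a assume a: "a \<in> {a. Rep_hahn x a \<noteq> 0 \<and> Rep_hahn y (e - a) \<noteq> 0}"
    then have "\<not> a < hdeg x" "\<not> e - a < hdeg y" using hx(2) hy(2) by auto
    then show "a \<in> {}" using e by simp
  qed auto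
  then show "Rep_hahn (x * y) e = 0" unfolding Rep_times conv_def by (simp only: sum.empty)
qed

lemma hdeg_mult:
  assumes "x \<noteq> 0" "y \<noteq> 0"
  shows "x * y \<noteq> 0" "hdeg (x * y) = hdeg x + hdeg y"
    "Rep_hahn (x * y) (hdeg (x * y)) = Rep_hahn x (hdeg x) * Rep_hahn y (hdeg y)"
proof -
  have nz: "Rep_hahn (x * y) (hdeg x + hdeg y) \<noteq> 0"
    using mult_lead(1)[OF assms] hdeg_props(1)[OF assms(1)] hdeg_props(1)[OF assms(2)] by simp
  note q = hdeg_eqI[OF nz mult_lead(2)[OF assms]]
  show "x * y \<noteq> 0" "hdeg (x * y) = hdeg x + hdeg y" using q by auto
  then show "Rep_hahn (x * y) (hdeg (x * y)) = Rep_hahn x (hdeg x) * Rep_hahn y (hdeg y)"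
    using mult_lead(1)[OF assms] by simp
qed

definition mon :: "complex \<Rightarrow> real \<Rightarrow> hahn" where
  "mon c e = Abs_hahn (\<lambda>a. if a = e then c else 0)"

lemma Rep_mon: "Rep_hahn (mon c e) = (\<lambda>a. if a = e then c else 0)"
  unfolding mon_def by (rule Abs_inv, rule wo_finite) (rule finite_subset[of _ "{e}"], auto)

lemma mon_mult: "mon c e * mon d f = mon (c * d) (e + f)"
proof -
  have "conv (\<lambda>a. if a = e then c else 0) (\<lambda>a. if a = f then d else 0) x =
        (if x = e + f then c * d else 0)" for x
  proof -
    have "{a. (if a = e then c else 0) \<noteq> 0 \<and> (if x - a = f then d else 0) \<noteq> 0} =
          (if c \<noteq> 0 \<and> d \<noteq> 0 \<and> x = e + f then {e} else {})"
      by auto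
    then show ?thesis unfolding conv_def by auto
  qed
  then show ?thesis
    by (simp add: Rep_hahn_inject[symmetric] Rep_times Rep_mon fun_eq_iff)
qed

lemma mon_add: "mon c e + mon d e = mon (c + d) e"
  by (simp add: Rep_hahn_inject[symmetric] Rep_plus Rep_mon fun_eq_iff)

lemma mon_zero: "mon 0 e = 0"
  by (simp add: Rep_hahn_inject[symmetric] Rep_zero Rep_mon fun_eq_iff)

lemma mon_one: "mon 1 0 = 1"
  by (simp add: Rep_hahn_inject[symmetric] Rep_one Rep_mon fun_eq_iff)

lemma mon_uminus: "- mon c e = mon (- c) e"
  by (simp add: Rep_hahn_inject[symmetric] Rep_uminus Rep_mon fun_eq_iff)

lemma hdeg_mon: "c \<noteq> 0 \<Longrightarrow> mon c e \<noteq> 0 \<and> hdeg (mon c e) = e"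
  using hdeg_eqI[of "mon c e" e] by (simp add: Rep_mon)

definition above :: "hahn \<Rightarrow> real \<Rightarrow> bool" where
  "above y e \<longleftrightarrow> (\<forall>a\<le>e. Rep_hahn y a = 0)"

lemma above_mon: "e < f \<Longrightarrow> above (mon d f) e"
  by (simp add: above_def Rep_mon)

lemma above_add: "above x e \<Longrightarrow> above y e \<Longrightarrow> above (x + y) e"
  by (simp add: above_def Rep_plus)

lemma above_zero: "above 0 e"
  by (simp add: above_def Rep_zero)

lemma lead:
  assumes "c \<noteq> 0" "above y e"
  shows "mon c e + y \<noteq> 0" "hdeg (mon c e + y) = e"
  using hdeg_eqI[of "mon c e + y" e] assms by (auto simp: above_def Rep_plus Rep_mon)

lemma monomial2: "i \<noteq> k \<Longrightarrow> sym_monomial {i, k} \<rho> = {#{i, \<rho> i}, {k, \<rho> k}#}"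
  by (simp add: sym_monomial_def mset_set.insert)

lemma monomial3: "sym_monomial {0, 1, 2::nat} \<rho> = {#{0, \<rho> 0}, {1, \<rho> 1}, {2, \<rho> 2}#}"
  by (simp add: sym_monomial_def mset_set.insert)

lemma tv2: "i \<noteq> k \<Longrightarrow> trop_value A {i, k} \<rho> = A i (\<rho> i) + A k (\<rho> k)"
  by (simp add: trop_value_def)

lemma tv3: "trop_value A {0, 1, 2::nat} \<rho> = A 0 (\<rho> 0) + A 1 (\<rho> 1) + A 2 (\<rho> 2)"
  by (simp add: trop_value_def)

lemma bij2:
  assumes "i \<noteq> k" "j \<noteq> l"
  shows "bij_betw \<rho> {i, k} {j, l} \<longleftrightarrow> (\<rho> i = j \<and> \<rho> k = l) \<or> (\<rho> i = l \<and> \<rho> k = j)"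
  using assms by (auto simp: bij_betw_def doubleton_eq_iff)

lemma bij3:
  fixes \<rho> :: "nat \<Rightarrow> nat"
  shows "bij_betw \<rho> {0, 1, 2::nat} {0, 1, 2} \<longleftrightarrow>
    (\<rho> 0 \<in> {0, 1, 2} \<and> \<rho> 1 \<in> {0, 1, 2} \<and> \<rho> 2 \<in> {0, 1, 2} \<and> \<rho> 0 \<noteq> \<rho> 1 \<and> \<rho> 0 \<noteq> \<rho> 2 \<and> \<rho> 1 \<noteq> \<rho> 2)"
  (is "?L \<longleftrightarrow> ?R")
proof
  assume L: ?L
  have inj: "inj_on \<rho> {0, 1, 2}" using L by (rule bij_betw_imp_inj_on)
  have img: "\<rho> ` {0, 1, 2} = {0, 1, 2}" using L by (rule bij_betw_imp_surj_on)
  have m: "\<rho> x \<in> {0, 1, 2}" if "x \<in> {0, 1, 2}" for x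
    using img that by (metis imageI)
  have d: "\<rho> x \<noteq> \<rho> y" if "x \<in> {0, 1, 2}" "y \<in> {0, 1, 2}" "x \<noteq> y" for x y
    using inj_onD[OF inj _ that(1,2)] that(3) by blast
  show ?R using m[of 0] m[of 1] m[of 2] d[of 0 1] d[of 0 2] d[of 1 2] by simp
next
  assume r: ?R
  have inj: "inj_on \<rho> {0, 1, 2}" using r unfolding inj_on_def by auto
  have sub: "\<rho> ` {0, 1, 2} \<subseteq> {0, 1, 2}" using r by auto
  have "card (\<rho> ` {0, 1, 2::nat}) = 3" using card_image[OF inj] by simp
  then have "\<rho> ` {0, 1, 2} = {0, 1, 2}"
    by (intro card_subset_eq[OF _ sub]) auto
  then show ?L using inj by (simp add: bij_betw_def)
qed

lemma sing2_of_eq: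
  assumes ik: "i \<noteq> k" and jl: "j \<noteq> l" and eq: "A i j + A k l = A i l + A k j"
  shows "sym_trop_singular A {i, k} {j, l}"
proof -
  define r1 where "r1 = (\<lambda>x::nat. if x = i then j else l)"
  define r2 where "r2 = (\<lambda>x::nat. if x = i then l else j)"
  have r1i: "r1 i = j" "r1 k = l" using ik by (auto simp: r1_def)
  have r2i: "r2 i = l" "r2 k = j" using ik by (auto simp: r2_def)
  have b1: "bij_betw r1 {i, k} {j, l}" using bij2[OF ik jl] r1i by blast
  have b2: "bij_betw r2 {i, k} {j, l}" using bij2[OF ik jl] r2i by blast
  have m: "sym_monomial {i, k} r1 \<noteq> sym_monomial {i, k} r2"
  proof
    assume "sym_monomial {i, k} r1 = sym_monomial {i, k} r2"
    then have e: "{#{i, j}, {k, l}#} = {#{i, l}, {k, j}#}" using monomial2[OF ik] r1i r2i by simp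
    have "{i, j} \<in># {#{i, j}, {k, l}#}" by simp
    then have "{i, j} \<in># {#{i, l}, {k, j}#}" using e by simp
    then have "{i, j} = {i, l} \<or> {i, j} = {k, j}" by simp
    then show False
    proof
      assume h: "{i, j} = {i, l}"
      have "j \<in> {i, l}" "l \<in> {i, j}" using h by blast+
      then show False using jl by blast
    next
      assume h: "{i, j} = {k, j}"
      have "i \<in> {k, j}" "k \<in> {i, j}" using h by blast+
      then show False using ik by blast
    qed
  qed
  have v: "trop_value A {i, k} r1 = trop_value A {i, k} r2"
    using eq by (simp add: tv2[OF ik] r1i r2i)
  have mn: "\<forall>\<rho>. bij_betw \<rho> {i, k} {j, l} \<longrightarrow> trop_value A {i, k} r1 \<le> trop_value A {i, k} \<rho>"
  proof (intro allI impI)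
    fix \<rho> assume "bij_betw \<rho> {i, k} {j, l}"
    then have "(\<rho> i = j \<and> \<rho> k = l) \<or> (\<rho> i = l \<and> \<rho> k = j)" using bij2[OF ik jl] by blast
    then show "trop_value A {i, k} r1 \<le> trop_value A {i, k} \<rho>"
      using eq by (auto simp: tv2[OF ik] r1i)
  qed
  show ?thesis unfolding sym_trop_singular_def
    using b1 b2 m v mn by blast
qed

lemma sing2_principal:
  assumes ij: "i \<noteq> j" and s: "sym_trop_singular A {i, j} {i, j}"
  shows "A i i + A j j = A i j + A j i"
proof -
  obtain r1 r2 where r: "bij_betw r1 {i, j} {i, j}" "bij_betw r2 {i, j} {i, j}"
    "sym_monomial {i, j} r1 \<noteq> sym_monomial {i, j} r2"
    "trop_value A {i, j} r1 = trop_value A {i, j} r2"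
    using s unfolding sym_trop_singular_def by blast
  have c1: "(r1 i = i \<and> r1 j = j) \<or> (r1 i = j \<and> r1 j = i)" using r(1) bij2[OF ij ij] by blast
  have c2: "(r2 i = i \<and> r2 j = j) \<or> (r2 i = j \<and> r2 j = i)" using r(2) bij2[OF ij ij] by blast
  have m1: "sym_monomial {i, j} r1 = {#{i, r1 i}, {j, r1 j}#}" by (rule monomial2[OF ij])
  have m2: "sym_monomial {i, j} r2 = {#{i, r2 i}, {j, r2 j}#}" by (rule monomial2[OF ij])
  have t1: "trop_value A {i, j} r1 = A i (r1 i) + A j (r1 j)" by (rule tv2[OF ij])
  have t2: "trop_value A {i, j} r2 = A i (r2 i) + A j (r2 j)" by (rule tv2[OF ij])
  from c1 show ?thesis
  proof
    assume h1: "r1 i = i \<and> r1 j = j"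
    from c2 show ?thesis
    proof
      assume h2: "r2 i = i \<and> r2 j = j"
      then show ?thesis using h1 r(3) m1 m2 by simp
    next
      assume h2: "r2 i = j \<and> r2 j = i"
      then show ?thesis using h1 r(4) t1 t2 by simp
    qed
  next
    assume h1: "r1 i = j \<and> r1 j = i"
    from c2 show ?thesis
    proof
      assume h2: "r2 i = i \<and> r2 j = j"
      then show ?thesis using h1 r(4) t1 t2 by simp
    next
      assume h2: "r2 i = j \<and> r2 j = i"
      then show ?thesis using h1 r(3) m1 m2 by simp
    qed
  qed
qed

definition W :: "(nat \<Rightarrow> nat \<Rightarrow> real) \<Rightarrow> nat \<Rightarrow> real" where
  "W A k = (if k = 0 then A 0 0 + A 1 1 + A 2 2 else if k = 1 then A 0 0 + 2 * A 1 2
     else if k = 2 then A 1 1 + 2 * A 0 2 else if k = 3 then A 2 2 + 2 * A 0 1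
     else A 0 1 + A 1 2 + A 0 2)"

definition Mon :: "nat \<Rightarrow> nat set multiset" where
  "Mon k = (if k = 0 then {#{0}, {1}, {2}#} else if k = 1 then {#{0}, {1, 2}, {1, 2}#}
     else if k = 2 then {#{0, 2}, {1}, {0, 2}#} else if k = 3 then {#{0, 1}, {0, 1}, {2}#}
     else {#{0, 1}, {1, 2}, {0, 2}#})"

definition sig :: "nat \<Rightarrow> nat \<Rightarrow> nat" where
  "sig k = (if k = 0 then (\<lambda>i. i) else if k = 1 then (\<lambda>i. if i = 1 then 2 else if i = 2 then 1 else i)
     else if k = 2 then (\<lambda>i. if i = 0 then 2 else if i = 2 then 0 else i)
     else if k = 3 then (\<lambda>i. if i = 0 then 1 else if i = 1 then 0 else i)
     else (\<lambda>i. if i = 0 then 1 else if i = 1 then 2 else if i = 2 then 0 else i))"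

definition symA :: "(nat \<Rightarrow> nat \<Rightarrow> real) \<Rightarrow> bool" where
  "symA A \<longleftrightarrow> A 1 0 = A 0 1 \<and> A 2 0 = A 0 2 \<and> A 2 1 = A 1 2"

lemma Mon_distinct: "p < 5 \<Longrightarrow> q < 5 \<Longrightarrow> p \<noteq> q \<Longrightarrow> Mon p \<noteq> Mon q"
proof
  assume pq: "p < 5" "q < 5" "p \<noteq> q" and e: "Mon p = Mon q"
  have "count (Mon p) {0} = count (Mon q) {0}" "count (Mon p) {1} = count (Mon q) {1}"
    "count (Mon p) {2} = count (Mon q) {2}" using e by auto
  moreover have "p = 0 \<or> p = 1 \<or> p = 2 \<or> p = 3 \<or> p = 4" "q = 0 \<or> q = 1 \<or> q = 2 \<or> q = 3 \<or> q = 4"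
    using pq by auto
  ultimately show False using pq(3) by (auto simp: Mon_def)
qed

lemma sig_class:
  assumes "k < 5" "symA A"
  shows "bij_betw (sig k) {0, 1, 2} {0, 1, 2}" "trop_value A {0, 1, 2} (sig k) = W A k"
    "sym_monomial {0, 1, 2} (sig k) = Mon k"
proof -
  have "k = 0 \<or> k = 1 \<or> k = 2 \<or> k = 3 \<or> k = 4" using assms by auto
  then show "bij_betw (sig k) {0, 1, 2} {0, 1, 2}" "trop_value A {0, 1, 2} (sig k) = W A k"
    "sym_monomial {0, 1, 2} (sig k) = Mon k"
    unfolding bij3 tv3 monomial3
    using assms(2) by (auto simp: sig_def W_def Mon_def symA_def insert_commute
        add_mset_commute)
qed

lemma class3:
  assumes "bij_betw \<rho> {0, 1, 2} {0, 1, 2}" "symA A"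
  shows "\<exists>k<5. trop_value A {0, 1, 2} \<rho> = W A k \<and> sym_monomial {0, 1, 2} \<rho> = Mon k"
proof -
  have "(\<rho> 0 = 0 \<and> \<rho> 1 = 1 \<and> \<rho> 2 = 2) \<or> (\<rho> 0 = 0 \<and> \<rho> 1 = 2 \<and> \<rho> 2 = 1) \<or>
        (\<rho> 0 = 2 \<and> \<rho> 1 = 1 \<and> \<rho> 2 = 0) \<or> (\<rho> 0 = 1 \<and> \<rho> 1 = 0 \<and> \<rho> 2 = 2) \<or>
        (\<rho> 0 = 1 \<and> \<rho> 1 = 2 \<and> \<rho> 2 = 0) \<or> (\<rho> 0 = 2 \<and> \<rho> 1 = 0 \<and> \<rho> 2 = 1)"
    using assms(1) unfolding bij3 by auto
  then show ?thesis
  proof (elim disjE)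
    assume h: "\<rho> 0 = 0 \<and> \<rho> 1 = 1 \<and> \<rho> 2 = 2"
    show ?thesis by (rule exI[of _ 0]) (use h assms(2) in \<open>simp add: trop_value_def sym_monomial_def mset_set.insert W_def Mon_def symA_def\<close>)
  next
    assume h: "\<rho> 0 = 0 \<and> \<rho> 1 = 2 \<and> \<rho> 2 = 1"
    show ?thesis by (rule exI[of _ 1]) (use h assms(2) in \<open>simp add: trop_value_def sym_monomial_def mset_set.insert W_def Mon_def symA_def insert_commute\<close>)
  next
    assume h: "\<rho> 0 = 2 \<and> \<rho> 1 = 1 \<and> \<rho> 2 = 0"
    show ?thesis by (rule exI[of _ 2]) (use h assms(2) in \<open>simp add: trop_value_def sym_monomial_def mset_set.insert W_def Mon_def symA_def insert_commute\<close>)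
  next
    assume h: "\<rho> 0 = 1 \<and> \<rho> 1 = 0 \<and> \<rho> 2 = 2"
    show ?thesis by (rule exI[of _ 3]) (use h assms(2) in \<open>simp add: trop_value_def sym_monomial_def mset_set.insert W_def Mon_def symA_def insert_commute\<close>)
  next
    assume h: "\<rho> 0 = 1 \<and> \<rho> 1 = 2 \<and> \<rho> 2 = 0"
    show ?thesis by (rule exI[of _ 4]) (use h assms(2) in \<open>simp add: trop_value_def sym_monomial_def mset_set.insert W_def Mon_def symA_def insert_commute add_mset_commute\<close>)
  next
    assume h: "\<rho> 0 = 2 \<and> \<rho> 1 = 0 \<and> \<rho> 2 = 1"
    show ?thesis by (rule exI[of _ 4]) (use h assms(2) in \<open>simp add: trop_value_def sym_monomial_def mset_set.insert W_def Mon_def symA_def insert_commute add_mset_commute\<close>)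
  qed
qed

definition tie3 :: "(nat \<Rightarrow> nat \<Rightarrow> real) \<Rightarrow> bool" where
  "tie3 A \<longleftrightarrow> (\<exists>p<5. \<exists>q<5. p \<noteq> q \<and> W A p = W A q \<and> (\<forall>r<5. W A p \<le> W A r))"

lemma sing3_iff:
  assumes "symA A"
  shows "sym_trop_singular A {0, 1, 2} {0, 1, 2} \<longleftrightarrow> tie3 A"
proof
  assume "sym_trop_singular A {0, 1, 2} {0, 1, 2}"
  then obtain r1 r2 where r: "bij_betw r1 {0, 1, 2} {0, 1, 2}" "bij_betw r2 {0, 1, 2} {0, 1, 2}"
    "sym_monomial {0, 1, 2} r1 \<noteq> sym_monomial {0, 1, 2} r2"
    "trop_value A {0, 1, 2} r1 = trop_value A {0, 1, 2} r2"
    "\<forall>\<rho>. bij_betw \<rho> {0, 1, 2} {0, 1, 2} \<longrightarrow> trop_value A {0, 1, 2} r1 \<le> trop_value A {0, 1, 2} \<rho>"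
    unfolding sym_trop_singular_def by blast
  obtain p where p: "p < 5" "trop_value A {0, 1, 2} r1 = W A p" "sym_monomial {0, 1, 2} r1 = Mon p"
    using class3[OF r(1) assms] by blast
  obtain q where q: "q < 5" "trop_value A {0, 1, 2} r2 = W A q" "sym_monomial {0, 1, 2} r2 = Mon q"
    using class3[OF r(2) assms] by blast
  have "\<forall>k<5. W A p \<le> W A k"
  proof (intro allI impI)
    fix k :: nat assume k: "k < 5"
    have "trop_value A {0, 1, 2} r1 \<le> trop_value A {0, 1, 2} (sig k)"
      using r(5) sig_class(1)[OF k assms] by blast
    then show "W A p \<le> W A k" using p(2) sig_class(2)[OF k assms] by simp
  qed
  moreover have "p \<noteq> q" using p(3) q(3) r(3) by auto
  moreover have "W A p = W A q" using p(2) q(2) r(4) by simp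
  ultimately show "tie3 A" unfolding tie3_def using p(1) q(1) by blast
next
  assume "tie3 A"
  then obtain p q where pq: "p < 5" "q < 5" "p \<noteq> q" "W A p = W A q" "\<forall>r<5. W A p \<le> W A r"
    unfolding tie3_def by blast
  have mn: "\<forall>\<rho>. bij_betw \<rho> {0, 1, 2} {0, 1, 2} \<longrightarrow> trop_value A {0, 1, 2} (sig p) \<le> trop_value A {0, 1, 2} \<rho>"
  proof (intro allI impI)
    fix \<rho> :: "nat \<Rightarrow> nat" assume "bij_betw \<rho> {0, 1, 2} {0, 1, 2}"
    then obtain k where k: "k < 5" "trop_value A {0, 1, 2} \<rho> = W A k"
      using class3[OF _ assms] by blast
    show "trop_value A {0, 1, 2} (sig p) \<le> trop_value A {0, 1, 2} \<rho>"
      using k pq(5) sig_class(2)[OF pq(1) assms] by simp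
  qed
  show "sym_trop_singular A {0, 1, 2} {0, 1, 2}" unfolding sym_trop_singular_def
    apply (rule exI[of _ "sig p"], rule exI[of _ "sig q"])
    using sig_class[OF pq(1) assms] sig_class[OF pq(2) assms] Mon_distinct[OF pq(1-3)] pq(4) mn
    by simp
qed

definition good :: "(nat \<Rightarrow> nat \<Rightarrow> real) \<Rightarrow> bool" where
  "good N \<longleftrightarrow> (\<exists>p q :: nat \<Rightarrow> hahn. \<forall>i<3. \<forall>j<3.
      p i * q j + q i * p j \<noteq> 0 \<and> hdeg (p i * q j + q i * p j) = N i j)"

lemma hsum2: "hsum 2 h = h 0 + h 1"
  by (simp add: hsum_def hadd_eq hzero_eq eval_nat_numeral upt_rec)

lemma hsum1: "hsum 1 h = h 0"
  by (simp add: hsum_def hadd_eq hzero_eq)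

lemma hsum3: "hsum 3 h = h 0 + h 1 + h 2"
  by (simp add: hsum_def hadd_eq hzero_eq eval_nat_numeral upt_rec add.assoc)

lemma good_lift:
  assumes "good A"
  shows "\<exists>M. sym_lift 3 A M \<and> hrank_le 3 M 2"
proof -
  obtain p q :: "nat \<Rightarrow> hahn" where pq: "\<forall>i<3. \<forall>j<3.
      p i * q j + q i * p j \<noteq> 0 \<and> hdeg (p i * q j + q i * p j) = A i j"
    using assms unfolding good_def by blast
  define M where "M i j = p i * q j + q i * p j" for i j
  have "sym_lift 3 A M" unfolding sym_lift_def
  proof (intro allI impI conjI)
    fix i j :: nat assume "i < 3" "j < 3"
    show "M i j = M j i" unfolding M_def by (simp add: algebra_simps)
    show "M i j \<noteq> hzero" using pq \<open>i < 3\<close> \<open>j < 3\<close> by (simp add: M_def hzero_eq)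
    show "hdeg (M i j) = A i j" using pq \<open>i < 3\<close> \<open>j < 3\<close> by (simp add: M_def)
  qed
  moreover have "hrank_le 3 M 2" unfolding hrank_le_def
    apply (rule exI[of _ "\<lambda>i k. if k = 0 then p i else q i"])
    apply (rule exI[of _ "\<lambda>k j. if k = 0 then q j else p j"])
    by (simp add: hsum2 hmul_eq M_def)
  ultimately show ?thesis by blast
qed

lemma good_perm:
  assumes s3: "\<forall>i<3. \<sigma> i < 3" and inv: "\<forall>i<3. \<sigma> (\<sigma> i) = i"
    and g: "good (\<lambda>i j. N (\<sigma> i) (\<sigma> j))"
  shows "good N"
proof -
  obtain p q :: "nat \<Rightarrow> hahn" where pq: "\<forall>i<3. \<forall>j<3.
      p i * q j + q i * p j \<noteq> 0 \<and> hdeg (p i * q j + q i * p j) = N (\<sigma> i) (\<sigma> j)"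
    using g unfolding good_def by blast
  show ?thesis unfolding good_def
  proof (rule exI[of _ "\<lambda>i. p (\<sigma> i)"], rule exI[of _ "\<lambda>i. q (\<sigma> i)"], intro allI impI)
    fix i j :: nat assume ij: "i < 3" "j < 3"
    have "\<sigma> i < 3" "\<sigma> j < 3" using s3 ij by auto
    then show "p (\<sigma> i) * q (\<sigma> j) + q (\<sigma> i) * p (\<sigma> j) \<noteq> 0 \<and>
          hdeg (p (\<sigma> i) * q (\<sigma> j) + q (\<sigma> i) * p (\<sigma> j)) = N i j"
      using pq inv ij by simp
  qed
qed

lemma good_norm:
  assumes g: "good (\<lambda>i j. A i j - x i - x j)"
  shows "good A"
proof -
  obtain p q :: "nat \<Rightarrow> hahn" where pq: "\<forall>i<3. \<forall>j<3.
      p i * q j + q i * p j \<noteq> 0 \<and> hdeg (p i * q j + q i * p j) = A i j - x i - x j"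
    using g unfolding good_def by blast
  show ?thesis unfolding good_def
  proof (rule exI[of _ "\<lambda>i. mon 1 (x i) * p i"], rule exI[of _ "\<lambda>i. mon 1 (x i) * q i"], intro allI impI)
    fix i j :: nat assume ij: "i < 3" "j < 3"
    have e: "mon 1 (x i) * p i * (mon 1 (x j) * q j) + mon 1 (x i) * q i * (mon 1 (x j) * p j)
        = mon 1 (x i + x j) * (p i * q j + q i * p j)"
    proof -
      have "mon 1 (x i + x j) = mon 1 (x i) * mon 1 (x j)" by (simp add: mon_mult)
      then show ?thesis by (simp add: algebra_simps)
    qed
    have nz: "p i * q j + q i * p j \<noteq> 0" and d: "hdeg (p i * q j + q i * p j) = A i j - x i - x j"
      using pq ij by auto
    have m: "mon 1 (x i + x j) \<noteq> 0" "hdeg (mon 1 (x i + x j)) = x i + x j" using hdeg_mon[of 1] by auto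
    show "mon 1 (x i) * p i * (mon 1 (x j) * q j) + mon 1 (x i) * q i * (mon 1 (x j) * p j) \<noteq> 0 \<and>
          hdeg (mon 1 (x i) * p i * (mon 1 (x j) * q j) + mon 1 (x i) * q i * (mon 1 (x j) * p j)) = A i j"
      unfolding e using hdeg_mult[OF m(1) nz] m(2) d by simp
  qed
qed

lemma hdeg_eqI2:
  assumes "Rep_hahn x e \<noteq> 0" "\<And>a. a < e \<Longrightarrow> Rep_hahn x a = 0"
  shows "x \<noteq> 0 \<and> hdeg x = e"
  using hdeg_eqI[OF assms] by blast

lemma two_mon: "mon 1 u + mon 1 (- u) \<noteq> 0 \<and> hdeg (mon 1 u + mon 1 (- u)) = - \<bar>u\<bar>"
proof (rule hdeg_eqI2)
  show "Rep_hahn (mon 1 u + mon 1 (- u)) (- \<bar>u\<bar>) \<noteq> 0"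
    by (simp only: Rep_plus Rep_mon) (auto simp: abs_if)
  show "\<And>a. a < - \<bar>u\<bar> \<Longrightarrow> Rep_hahn (mon 1 u + mon 1 (- u)) a = 0"
    by (simp only: Rep_plus Rep_mon) (auto split: abs_split)
qed

lemma good_tree:
  assumes "\<forall>i<3. \<forall>j<3. N i j = - \<bar>\<alpha> i - \<alpha> j\<bar>"
  shows "good N"
  unfolding good_def
proof (rule exI[of _ "\<lambda>i. mon 1 (\<alpha> i)"], rule exI[of _ "\<lambda>i. mon 1 (- \<alpha> i)"], intro allI impI)
  fix i j :: nat assume ij: "i < 3" "j < 3"
  have e: "mon 1 (\<alpha> i) * mon 1 (- \<alpha> j) + mon 1 (- \<alpha> i) * mon 1 (\<alpha> j) =
      mon 1 (\<alpha> i - \<alpha> j) + mon 1 (- (\<alpha> i - \<alpha> j))"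
    by (simp add: mon_mult)
  show "mon 1 (\<alpha> i) * mon 1 (- \<alpha> j) + mon 1 (- \<alpha> i) * mon 1 (\<alpha> j) \<noteq> 0 \<and>
        hdeg (mon 1 (\<alpha> i) * mon 1 (- \<alpha> j) + mon 1 (- \<alpha> i) * mon 1 (\<alpha> j)) = N i j"
    unfolding e using two_mon[of "\<alpha> i - \<alpha> j"] assms ij by simp
qed

lemma good_gamma:
  assumes d: "N 0 0 = 0" "N 1 1 = 0" "N 2 2 = 0"
    and s: "\<forall>i<3. \<forall>j<3. N i j = N j i"
    and a: "N 0 1 = 0" and b: "N 0 2 = b" "b \<ge> 0" and c: "N 1 2 = c" "c \<ge> 0"
  shows "good N"
proof -
  define p0 where "p0 = mon 1 0"
  define q0 where "q0 = mon 1 0"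
  define q1 where "q1 = mon 1 0 + mon (-3) b + mon 3 c"
  define q2 where "q2 = mon (-1) 0 + mon 3 b"
  define p :: "nat \<Rightarrow> hahn" where "p = (\<lambda>i. p0)"
  define q :: "nat \<Rightarrow> hahn" where "q = (\<lambda>i. if i = 0 then q0 else if i = 1 then q1 else q2)"
  have pv: "p i = p0" for i by (simp add: p_def)
  have qv: "q 0 = q0" "q 1 = q1" "q 2 = q2" by (simp_all add: q_def)
  let ?E = "\<lambda>i j. p i * q j + q i * p j"
  have E: "?E i j \<noteq> 0 \<and> hdeg (?E i j) = N i j" if "i \<le> j" "j < 3" for i j
  proof -
    have "(i = 0 \<and> j = 0) \<or> (i = 0 \<and> j = 1) \<or> (i = 0 \<and> j = 2) \<or> (i = 1 \<and> j = 1) \<or>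
          (i = 1 \<and> j = 2) \<or> (i = 2 \<and> j = 2)" using that by auto
    then show ?thesis
    proof (elim disjE conjE)
      assume h: "i = 0" "j = 0"
      show ?thesis unfolding h d pv qv
        apply (intro hdeg_eqI2)
        unfolding p0_def q0_def q1_def q2_def distrib_left distrib_right mon_mult Rep_plus Rep_mon
        by auto
    next
      assume h: "i = 0" "j = 1"
      show ?thesis unfolding h a pv qv
        apply (intro hdeg_eqI2)
        unfolding p0_def q0_def q1_def q2_def distrib_left distrib_right mon_mult Rep_plus Rep_mon
        using b c by auto
    next
      assume h: "i = 0" "j = 2"
      show ?thesis unfolding h b(1) pv qv
        apply (intro hdeg_eqI2)
        unfolding p0_def q0_def q1_def q2_def distrib_left distrib_right mon_mult Rep_plus Rep_mon
        using b c by auto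
    next
      assume h: "i = 1" "j = 1"
      show ?thesis unfolding h d pv qv
        apply (intro hdeg_eqI2)
        unfolding p0_def q0_def q1_def q2_def distrib_left distrib_right mon_mult Rep_plus Rep_mon
        using b c by auto
    next
      assume h: "i = 1" "j = 2"
      show ?thesis unfolding h c(1) pv qv
        apply (intro hdeg_eqI2)
        unfolding p0_def q0_def q1_def q2_def distrib_left distrib_right mon_mult Rep_plus Rep_mon
        using b c by auto
    next
      assume h: "i = 2" "j = 2"
      show ?thesis unfolding h d pv qv
        apply (intro hdeg_eqI2)
        unfolding p0_def q0_def q1_def q2_def distrib_left distrib_right mon_mult Rep_plus Rep_mon
        using b c by auto
    qed
  qed
  show ?thesis unfolding good_def
  proof (rule exI[of _ p], rule exI[of _ q], intro allI impI)
    fix i j :: nat assume ij: "i < 3" "j < 3"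
    show "?E i j \<noteq> 0 \<and> hdeg (?E i j) = N i j"
    proof (cases "i \<le> j")
      case True then show ?thesis using E ij by blast
    next
      case False
      then have "?E j i \<noteq> 0 \<and> hdeg (?E j i) = N j i" using E ij by simp
      moreover have "?E j i = ?E i j" by (simp add: algebra_simps)
      ultimately show ?thesis using s ij by simp
    qed
  qed
qed


lemma good_alpha0:
  assumes d: "N 0 0 = 0" "N 1 1 = 0" "N 2 2 = 0"
    and s: "\<forall>i<3. \<forall>j<3. N i j = N j i"
    and a: "N 0 1 = m" and b: "N 0 2 = m" "m < 0" and c: "N 1 2 = c" "c \<ge> 0"
  shows "good N"
proof -
  define p0 where "p0 = mon 1 0"
  define p1 where "p1 = mon 1 (- m)"
  define p2 where "p2 = mon 1 (- m)"
  define q0 where "q0 = mon 1 0"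
  define q1 where "q1 = mon 1 m"
  define q2 where "q2 = mon (-1) m + mon 3 (m + c)"
  define p :: "nat \<Rightarrow> hahn" where "p = (\<lambda>i. if i = 0 then p0 else if i = 1 then p1 else p2)"
  define q :: "nat \<Rightarrow> hahn" where "q = (\<lambda>i. if i = 0 then q0 else if i = 1 then q1 else q2)"
  have pv: "p 0 = p0" "p 1 = p1" "p 2 = p2" by (simp_all add: p_def)
  have qv: "q 0 = q0" "q 1 = q1" "q 2 = q2" by (simp_all add: q_def)
  let ?E = "\<lambda>i j. p i * q j + q i * p j"
  have E: "?E i j \<noteq> 0 \<and> hdeg (?E i j) = N i j" if "i \<le> j" "j < 3" for i j
  proof -
    have "(i = 0 \<and> j = 0) \<or> (i = 0 \<and> j = 1) \<or> (i = 0 \<and> j = 2) \<or> (i = 1 \<and> j = 1) \<or>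
          (i = 1 \<and> j = 2) \<or> (i = 2 \<and> j = 2)" using that by auto
    then show ?thesis
    proof (elim disjE conjE)
      assume h: "i = 0" "j = 0"
      show ?thesis unfolding h d pv qv
        apply (intro hdeg_eqI2)
        unfolding p0_def p1_def p2_def q0_def q1_def q2_def distrib_left distrib_right mon_mult Rep_plus Rep_mon
        by auto
    next
      assume h: "i = 0" "j = 1"
      show ?thesis unfolding h a pv qv
        apply (intro hdeg_eqI2)
        unfolding p0_def p1_def p2_def q0_def q1_def q2_def distrib_left distrib_right mon_mult Rep_plus Rep_mon
        using b c by auto
    next
      assume h: "i = 0" "j = 2"
      show ?thesis unfolding h b(1) pv qv
        apply (intro hdeg_eqI2)
        unfolding p0_def p1_def p2_def q0_def q1_def q2_def distrib_left distrib_right mon_mult Rep_plus Rep_mon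
        using b c by auto
    next
      assume h: "i = 1" "j = 1"
      show ?thesis unfolding h d pv qv
        apply (intro hdeg_eqI2)
        unfolding p0_def p1_def p2_def q0_def q1_def q2_def distrib_left distrib_right mon_mult Rep_plus Rep_mon
        using b c by auto
    next
      assume h: "i = 1" "j = 2"
      show ?thesis unfolding h c(1) pv qv
        apply (intro hdeg_eqI2)
        unfolding p0_def p1_def p2_def q0_def q1_def q2_def distrib_left distrib_right mon_mult Rep_plus Rep_mon
        using b c by auto
    next
      assume h: "i = 2" "j = 2"
      show ?thesis unfolding h d pv qv
        apply (intro hdeg_eqI2)
        unfolding p0_def p1_def p2_def q0_def q1_def q2_def distrib_left distrib_right mon_mult Rep_plus Rep_mon
        using b c by auto
    qed
  qed
  show ?thesis unfolding good_def
  proof (rule exI[of _ p], rule exI[of _ q], intro allI impI)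
    fix i j :: nat assume ij: "i < 3" "j < 3"
    show "?E i j \<noteq> 0 \<and> hdeg (?E i j) = N i j"
    proof (cases "i \<le> j")
      case True then show ?thesis using E ij by blast
    next
      case False
      then have "?E j i \<noteq> 0 \<and> hdeg (?E j i) = N j i" using E ij by simp
      moreover have "?E j i = ?E i j" by (simp add: algebra_simps)
      ultimately show ?thesis using s ij by simp
    qed
  qed
qed


lemma good_alpha:
  assumes d: "N 0 0 = 0" "N 1 1 = 0" "N 2 2 = 0"
    and s: "\<forall>i<3. \<forall>j<3. N i j = N j i"
    and a: "N 0 1 = m" and b: "N 0 2 = m" "m \<le> 0" and c: "N 1 2 = c" "c \<ge> 0"
  shows "good N"
proof (cases "m = 0")
  case True
  then show ?thesis using good_gamma[OF d s _ _ _ c] a b by simp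
next
  case False
  then show ?thesis using good_alpha0[OF d s a b(1) _ c] b(2) by simp
qed

lemma tie_cases:
  assumes t: "tie3 N" and d: "N 0 0 = 0" "N 1 1 = 0" "N 2 2 = 0"
  shows "(N 0 1 = 0 \<and> N 0 2 \<ge> 0 \<and> N 1 2 \<ge> 0) \<or> (N 0 2 = 0 \<and> N 0 1 \<ge> 0 \<and> N 1 2 \<ge> 0) \<or>
         (N 1 2 = 0 \<and> N 0 1 \<ge> 0 \<and> N 0 2 \<ge> 0) \<or>
         (N 0 1 = N 0 2 \<and> N 0 1 \<le> 0 \<and> N 1 2 \<ge> 0) \<or> (N 0 1 = N 1 2 \<and> N 0 1 \<le> 0 \<and> N 0 2 \<ge> 0) \<or>
         (N 0 2 = N 1 2 \<and> N 0 2 \<le> 0 \<and> N 0 1 \<ge> 0) \<or>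
         (N 0 1 = N 0 2 + N 1 2 \<and> N 0 2 \<le> 0 \<and> N 1 2 \<le> 0) \<or>
         (N 0 2 = N 0 1 + N 1 2 \<and> N 0 1 \<le> 0 \<and> N 1 2 \<le> 0) \<or>
         (N 1 2 = N 0 1 + N 0 2 \<and> N 0 1 \<le> 0 \<and> N 0 2 \<le> 0)"
proof -
  obtain p q where pq: "p < 5" "q < 5" "p \<noteq> q" "W N p = W N q" "\<forall>r<5. W N p \<le> W N r"
    using t unfolding tie3_def by blast
  have w: "W N p \<le> W N 0" "W N p \<le> W N 1" "W N p \<le> W N 2" "W N p \<le> W N 3" "W N p \<le> W N 4"
    using pq(5) by auto
  have w': "W N q \<le> W N 0" "W N q \<le> W N 1" "W N q \<le> W N 2" "W N q \<le> W N 3" "W N q \<le> W N 4"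
    using w pq(4) by auto
  have Wv: "W N 0 = 0" "W N 1 = 2 * N 1 2" "W N 2 = 2 * N 0 2" "W N 3 = 2 * N 0 1"
    "W N 4 = N 0 1 + N 1 2 + N 0 2" using d by (simp_all add: W_def)
  have "p = 0 \<or> p = 1 \<or> p = 2 \<or> p = 3 \<or> p = 4" "q = 0 \<or> q = 1 \<or> q = 2 \<or> q = 3 \<or> q = 4"
    using pq by auto
  then show ?thesis
    using pq(3,4) w w' Wv
    apply -
    apply (elim disjE)
    apply (simp_all)
    done
qed


definition sw01 :: "nat \<Rightarrow> nat" where "sw01 i = (if i = 0 then 1 else if i = 1 then 0 else i)"
definition sw02 :: "nat \<Rightarrow> nat" where "sw02 i = (if i = 0 then 2 else if i = 2 then 0 else i)"
definition sw12 :: "nat \<Rightarrow> nat" where "sw12 i = (if i = 1 then 2 else if i = 2 then 1 else i)"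

lemma sw_props:
  "\<forall>i<3. sw01 i < 3" "\<forall>i<3. sw01 (sw01 i) = i"
  "\<forall>i<3. sw02 i < 3" "\<forall>i<3. sw02 (sw02 i) = i"
  "\<forall>i<3. sw12 i < 3" "\<forall>i<3. sw12 (sw12 i) = i"
  by (auto simp: sw01_def sw02_def sw12_def)

lemma sw_vals:
  "sw01 0 = 1" "sw01 1 = 0" "sw01 2 = 2"
  "sw02 0 = 2" "sw02 1 = 1" "sw02 2 = 0"
  "sw12 0 = 0" "sw12 1 = 2" "sw12 2 = 1"
  by (simp_all add: sw01_def sw02_def sw12_def)

lemma perm_sym:
  assumes "\<forall>i<3. \<forall>j<3. N i j = N j i" "\<forall>i<3. \<sigma> i < 3"
  shows "\<forall>i<3. \<forall>j<3. N (\<sigma> i) (\<sigma> j) = N (\<sigma> j) (\<sigma> i)"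
  using assms by auto

lemma tree_check:
  fixes \<alpha> :: "nat \<Rightarrow> real"
  assumes s: "\<forall>i<3. \<forall>j<3. N i j = N j i" and d: "N 0 0 = 0" "N 1 1 = 0" "N 2 2 = 0"
    and e: "N 0 1 = - \<bar>\<alpha> 0 - \<alpha> 1\<bar>" "N 0 2 = - \<bar>\<alpha> 0 - \<alpha> 2\<bar>" "N 1 2 = - \<bar>\<alpha> 1 - \<alpha> 2\<bar>"
  shows "good N"
proof (rule good_tree[of N \<alpha>], intro allI impI)
  fix i j :: nat assume ij: "i < 3" "j < 3"
  then have "i = 0 \<or> i = 1 \<or> i = 2" "j = 0 \<or> j = 1 \<or> j = 2" by auto
  then show "N i j = - \<bar>\<alpha> i - \<alpha> j\<bar>"
    using s d e by (elim disjE) (auto simp: abs_minus_commute)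
qed

lemma tie_good:
  assumes t: "tie3 N" and d: "N 0 0 = 0" "N 1 1 = 0" "N 2 2 = 0"
    and s: "\<forall>i<3. \<forall>j<3. N i j = N j i"
  shows "good N"
proof -
  have s10: "N 1 0 = N 0 1" "N 2 0 = N 0 2" "N 2 1 = N 1 2" using s by auto
  note cs = tie_cases[OF t d]
  from cs show ?thesis
  proof (elim disjE conjE)
    assume "N 0 1 = 0" "N 0 2 \<ge> 0" "N 1 2 \<ge> 0"
    then show ?thesis using good_gamma[OF d s] by blast
  next
    assume h: "N 0 2 = 0" "N 0 1 \<ge> 0" "N 1 2 \<ge> 0"
    have "good (\<lambda>i j. N (sw12 i) (sw12 j))"
      by (rule good_gamma[where b = "N 0 1" and c = "N 1 2"])
        (use h d s10 perm_sym[OF s sw_props(5)] in \<open>simp_all add: sw01_def sw02_def sw12_def\<close>)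
    then show ?thesis using good_perm sw_props(5,6) by blast
  next
    assume h: "N 1 2 = 0" "N 0 1 \<ge> 0" "N 0 2 \<ge> 0"
    have "good (\<lambda>i j. N (sw02 i) (sw02 j))"
      by (rule good_gamma[where b = "N 0 2" and c = "N 0 1"])
        (use h d s10 perm_sym[OF s sw_props(3)] in \<open>simp_all add: sw01_def sw02_def sw12_def\<close>)
    then show ?thesis using good_perm sw_props(3,4) by blast
  next
    assume h: "N 0 1 = N 0 2" "N 0 1 \<le> 0" "N 1 2 \<ge> 0"
    show ?thesis
      by (rule good_alpha[where m = "N 0 1" and c = "N 1 2"]) (use h d s in simp_all)
  next
    assume h: "N 0 1 = N 1 2" "N 0 1 \<le> 0" "N 0 2 \<ge> 0"
    have "good (\<lambda>i j. N (sw01 i) (sw01 j))"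
      by (rule good_alpha[where m = "N 0 1" and c = "N 0 2"])
        (use h d s10 perm_sym[OF s sw_props(1)] in \<open>simp_all add: sw01_def sw02_def sw12_def\<close>)
    then show ?thesis using good_perm sw_props(1,2) by blast
  next
    assume h: "N 0 2 = N 1 2" "N 0 2 \<le> 0" "N 0 1 \<ge> 0"
    have "good (\<lambda>i j. N (sw02 i) (sw02 j))"
      by (rule good_alpha[where m = "N 0 2" and c = "N 0 1"])
        (use h d s10 perm_sym[OF s sw_props(3)] in \<open>simp_all add: sw01_def sw02_def sw12_def\<close>)
    then show ?thesis using good_perm sw_props(3,4) by blast
  next
    assume h: "N 0 1 = N 0 2 + N 1 2" "N 0 2 \<le> 0" "N 1 2 \<le> 0"
    show ?thesis
      by (rule tree_check[OF s d, of "\<lambda>i. if i = 0 then 0 else if i = 1 then - N 0 1 else - N 0 2"])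
        (use h in \<open>simp_all add: abs_if\<close>)
  next
    assume h: "N 0 2 = N 0 1 + N 1 2" "N 0 1 \<le> 0" "N 1 2 \<le> 0"
    show ?thesis
      by (rule tree_check[OF s d, of "\<lambda>i. if i = 0 then 0 else if i = 1 then - N 0 1 else - N 0 2"])
        (use h in \<open>simp_all add: abs_if\<close>)
  next
    assume h: "N 1 2 = N 0 1 + N 0 2" "N 0 1 \<le> 0" "N 0 2 \<le> 0"
    show ?thesis
      by (rule tree_check[OF s d, of "\<lambda>i. if i = 0 then 0 else if i = 1 then - N 0 1 else N 0 2"])
        (use h in \<open>simp_all add: abs_if\<close>)
  qed
qed

lemma sing3_lift:
  assumes s: "\<forall>i<3. \<forall>j<3. A i j = A j i" and sg: "sym_trop_singular A {0, 1, 2} {0, 1, 2}"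
  shows "\<exists>M. sym_lift 3 A M \<and> hrank_le 3 M 2"
proof -
  have sA: "symA A" using s unfolding symA_def by auto
  have tA: "tie3 A" using sg sing3_iff[OF sA] by simp
  define N where "N i j = A i j - A i i / 2 - A j j / 2" for i j
  have WN: "W N k = W A k - (A 0 0 + A 1 1 + A 2 2)" for k
    using sA unfolding W_def N_def symA_def by (simp add: algebra_simps)
  have tN: "tie3 N" using tA unfolding tie3_def WN by simp
  have dN: "N 0 0 = 0" "N 1 1 = 0" "N 2 2 = 0" by (simp_all add: N_def)
  have sN: "\<forall>i<3. \<forall>j<3. N i j = N j i" using s by (simp add: N_def)
  have "good N" by (rule tie_good[OF tN dN sN])
  then have "good (\<lambda>i j. A i j - A i i / 2 - A j j / 2)" by (simp add: N_def[abs_def])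
  then have "good A" by (rule good_norm)
  then show ?thesis by (rule good_lift)
qed

lemma det0:
  fixes b0 b1 c0 c1 :: "nat \<Rightarrow> 'a::comm_ring_1"
  defines "e \<equiv> \<lambda>i j. b0 i * c0 j + b1 i * c1 j"
  shows "e 0 0 * e 1 1 * e 2 2 - e 0 0 * e 1 2 * e 2 1 - e 0 1 * e 1 0 * e 2 2
       + e 0 1 * e 1 2 * e 2 0 + e 0 2 * e 1 0 * e 2 1 - e 0 2 * e 1 1 * e 2 0 = 0"
  unfolding e_def by (simp add: algebra_simps)

lemma hsum1': "hsum (Suc 0) h = h 0"
  using hsum1 by simp

lemma Rep_2: "Rep_hahn (2 * x) = (\<lambda>a. 2 * Rep_hahn x a)"
proof -
  have e: "2 * x = x + x" by (rule mult_2)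
  show ?thesis unfolding e Rep_plus by (simp add: fun_eq_iff)
qed

lemma lift_sym:
  assumes "sym_lift 3 A M"
  shows "\<forall>i<3. \<forall>j<3. A i j = A j i"
proof (intro allI impI)
  fix i j :: nat assume ij: "i < 3" "j < 3"
  have "M i j = M j i" "hdeg (M i j) = A i j" "hdeg (M j i) = A j i"
    using assms ij unfolding sym_lift_def by blast+
  then show "A i j = A j i" by simp
qed

lemma lift_nz: "sym_lift 3 A M \<Longrightarrow> i < 3 \<Longrightarrow> j < 3 \<Longrightarrow> M i j \<noteq> 0 \<and> hdeg (M i j) = A i j"
  unfolding sym_lift_def by (simp add: hzero_eq)

lemma rank0_false:
  assumes "sym_lift 3 A M" "hrank_le 3 M 0"
  shows False
proof -
  obtain B C where "\<forall>i<3. \<forall>j<3. M i j = hsum 0 (\<lambda>k. hmul (B i k) (C k j))"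
    using assms(2) unfolding hrank_le_def by blast
  then have "M 0 0 = 0" by (simp add: hsum_def hzero_eq)
  then show False using lift_nz[OF assms(1), of 0 0] by simp
qed

lemma rank1_sing:
  assumes L: "sym_lift 3 A M" and R: "hrank_le 3 M 1"
    and I: "I \<subseteq> {..<3}" "card I = 2" and J: "J \<subseteq> {..<3}" "card J = 2"
  shows "sym_trop_singular A I J"
proof -
  obtain B C where BC: "\<forall>i<3. \<forall>j<3. M i j = hsum 1 (\<lambda>k. hmul (B i k) (C k j))"
    using R unfolding hrank_le_def by blast
  have deg: "A i j = hdeg (B i 0) + hdeg (C 0 j)" if "i < 3" "j < 3" for i j
  proof -
    have e: "M i j = B i 0 * C 0 j" using BC that by (simp add: hsum1 hsum1' hmul_eq)
    have nz: "M i j \<noteq> 0" "hdeg (M i j) = A i j" using lift_nz[OF L that] by auto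
    have "B i 0 \<noteq> 0" "C 0 j \<noteq> 0" using nz(1) e by auto
    then show ?thesis using hdeg_mult(2)[of "B i 0" "C 0 j"] e nz(2) by simp
  qed
  from I(2) obtain i k where ik: "I = {i, k}" "i \<noteq> k" unfolding card_2_iff by blast
  from J(2) obtain j l where jl: "J = {j, l}" "j \<noteq> l" unfolding card_2_iff by blast
  have "i \<in> I" "k \<in> I" "j \<in> J" "l \<in> J" unfolding ik(1) jl(1) by simp_all
  then have lt: "i < 3" "k < 3" "j < 3" "l < 3" using I(1) J(1) by blast+
  have "A i j + A k l = A i l + A k j"
    unfolding deg[OF lt(1) lt(3)] deg[OF lt(2) lt(4)] deg[OF lt(1) lt(4)] deg[OF lt(2) lt(3)] by simp
  then have "sym_trop_singular A {i, k} {j, l}" by (rule sing2_of_eq[OF ik(2) jl(2)])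
  then show ?thesis unfolding ik(1) jl(1) .
qed

lemma rank2_tie:
  assumes L: "sym_lift 3 A M" and R: "hrank_le 3 M 2"
  shows "tie3 A"
proof (rule ccontr)
  assume nt: "\<not> tie3 A"
  obtain B C where BC: "\<forall>i<3. \<forall>j<3. M i j = hsum 2 (\<lambda>k. hmul (B i k) (C k j))"
    using R unfolding hrank_le_def by blast
  have Me: "M i j = B i 0 * C 0 j + B i 1 * C 1 j" if "i < 3" "j < 3" for i j
    using BC that by (simp add: hsum2 hmul_eq)
  have Ms: "M 1 0 = M 0 1" "M 2 0 = M 0 2" "M 2 1 = M 1 2"
    using L unfolding sym_lift_def by auto
  have d: "M 0 0 * M 1 1 * M 2 2 - M 0 0 * M 1 2 * M 2 1 - M 0 1 * M 1 0 * M 2 2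
       + M 0 1 * M 1 2 * M 2 0 + M 0 2 * M 1 0 * M 2 1 - M 0 2 * M 1 1 * M 2 0 = 0"
    using det0[of "\<lambda>i. B i 0" "\<lambda>j. C 0 j" "\<lambda>i. B i 1" "\<lambda>j. C 1 j"] by (simp add: Me)
  define T :: "nat \<Rightarrow> hahn" where "T r = (if r = 0 then M 0 0 * M 1 1 * M 2 2
     else if r = 1 then M 0 0 * M 1 2 * M 1 2 else if r = 2 then M 1 1 * M 0 2 * M 0 2
     else if r = 3 then M 2 2 * M 0 1 * M 0 1 else M 0 1 * M 1 2 * M 0 2)" for r
  have Z: "T 0 + T 4 + T 4 - T 1 - T 2 - T 3 = 0"
    using d unfolding T_def Ms by (simp add: algebra_simps)
  have nz: "\<And>i j. i < 3 \<Longrightarrow> j < 3 \<Longrightarrow> M i j \<noteq> 0" and dg: "\<And>i j. i < 3 \<Longrightarrow> j < 3 \<Longrightarrow> hdeg (M i j) = A i j"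
    using lift_nz[OF L] by auto
  have prod3: "x * y * z \<noteq> 0 \<and> hdeg (x * y * z) = hdeg x + hdeg y + hdeg z"
    if "x \<noteq> 0" "y \<noteq> 0" "z \<noteq> 0" for x y z :: hahn
    using hdeg_mult[OF that(1,2)] hdeg_mult[OF _ that(3), of "x * y"] by simp
  have sA: "A 1 0 = A 0 1" "A 2 0 = A 0 2" "A 2 1 = A 1 2" using lift_sym[OF L] by auto
  have nzs: "M 0 0 \<noteq> 0" "M 1 1 \<noteq> 0" "M 2 2 \<noteq> 0" "M 0 1 \<noteq> 0" "M 0 2 \<noteq> 0" "M 1 2 \<noteq> 0"
    by (simp_all add: nz)
  have dgs: "hdeg (M 0 0) = A 0 0" "hdeg (M 1 1) = A 1 1" "hdeg (M 2 2) = A 2 2"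
    "hdeg (M 0 1) = A 0 1" "hdeg (M 0 2) = A 0 2" "hdeg (M 1 2) = A 1 2"
    by (simp_all add: dg)
  have Tp: "T r \<noteq> 0 \<and> hdeg (T r) = W A r" if "r < 5" for r
  proof -
    have "r = 0 \<or> r = 1 \<or> r = 2 \<or> r = 3 \<or> r = 4" using that by auto
    then show ?thesis
    proof (elim disjE)
      assume h: "r = 0" show ?thesis unfolding h T_def W_def
        using prod3[OF nzs(1) nzs(2) nzs(3)] dgs by simp
    next
      assume h: "r = 1" show ?thesis unfolding h T_def W_def
        using prod3[OF nzs(1) nzs(6) nzs(6)] dgs by simp
    next
      assume h: "r = 2" show ?thesis unfolding h T_def W_def
        using prod3[OF nzs(2) nzs(5) nzs(5)] dgs by simp
    next
      assume h: "r = 3" show ?thesis unfolding h T_def W_def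
        using prod3[OF nzs(3) nzs(4) nzs(4)] dgs by simp
    next
      assume h: "r = 4" show ?thesis unfolding h T_def W_def
        using prod3[OF nzs(4) nzs(6) nzs(5)] dgs by simp
    qed
  qed
  have fin: "finite (W A ` {..<5})" "W A ` {..<5} \<noteq> {}"
    by simp (metis empty_iff image_eqI lessThan_iff zero_less_numeral)
  obtain k where k: "k < 5" "W A k = Min (W A ` {..<5})" using Min_in[OF fin] by auto
  have kmin: "W A k \<le> W A r" if "r < 5" for r using k Min_le[OF fin(1)] that by simp
  have kstrict: "W A k < W A r" if "r < 5" "r \<noteq> k" for r
  proof (rule ccontr)
    assume "\<not> W A k < W A r"
    then have "W A k = W A r" using kmin[OF that(1)] by simp
    then have "\<exists>p<5. \<exists>q<5. p \<noteq> q \<and> W A p = W A q \<and> (\<forall>r<5. W A p \<le> W A r)"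
      using k(1) that kmin by blast
    then have "tie3 A" unfolding tie3_def .
    then show False using nt by simp
  qed
  define v where "v = W A k"
  have R0: "Rep_hahn (T r) v = 0" if "r < 5" "r \<noteq> k" for r
    using hdeg_props(2)[of "T r" v] Tp[OF that(1)] kstrict[OF that] by (simp add: v_def)
  have R1: "Rep_hahn (T k) v \<noteq> 0"
    using hdeg_props(1)[of "T k"] Tp[OF k(1)] by (simp add: v_def)
  have "Rep_hahn (T 0 + T 4 + T 4 - T 1 - T 2 - T 3) v = 0" using Z by (simp add: Rep_zero)
  then have E: "Rep_hahn (T 0) v + Rep_hahn (T 4) v + Rep_hahn (T 4) v - Rep_hahn (T 1) v
      - Rep_hahn (T 2) v - Rep_hahn (T 3) v = 0" by (simp add: Rep_plus Rep_minus Rep_2)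
  have "k = 0 \<or> k = 1 \<or> k = 2 \<or> k = 3 \<or> k = 4" using k(1) by auto
  then show False
  proof (elim disjE)
    assume h: "k = 0" then show False using E R1 R0[of 1] R0[of 2] R0[of 3] R0[of 4] by simp
  next
    assume h: "k = 1" then show False using E R1 R0[of 0] R0[of 2] R0[of 3] R0[of 4] by simp
  next
    assume h: "k = 2" then show False using E R1 R0[of 1] R0[of 0] R0[of 3] R0[of 4] by simp
  next
    assume h: "k = 3" then show False using E R1 R0[of 1] R0[of 2] R0[of 0] R0[of 4] by simp
  next
    assume h: "k = 4" then show False using E R1 R0[of 1] R0[of 2] R0[of 3] R0[of 0] by simp
  qed
qed

lemma principal_rank1:
  assumes s: "\<forall>i<3. \<forall>j<3. A i j = A j i"
    and p: "\<forall>i<3. \<forall>j<3. i \<noteq> j \<longrightarrow> A i i + A j j = A i j + A j i"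
  shows "\<exists>M. sym_lift 3 A M \<and> hrank_le 3 M 1"
proof -
  define M where "M i j = mon 1 (A i i / 2) * mon 1 (A j j / 2)" for i j
  have "sym_lift 3 A M" unfolding sym_lift_def
  proof (intro allI impI conjI)
    fix i j :: nat assume ij: "i < 3" "j < 3"
    show "M i j = M j i" unfolding M_def by (simp add: mult.commute)
    have e: "M i j = mon 1 ((A i i + A j j) / 2)" unfolding M_def by (simp add: mon_mult add_divide_distrib)
    show "M i j \<noteq> hzero" unfolding e hzero_eq using hdeg_mon[of 1] by simp
    have "(A i i + A j j) / 2 = A i j"
    proof (cases "i = j")
      case True then show ?thesis by simp
    next
      case False then show ?thesis using p s ij by fastforce
    qed
    then show "hdeg (M i j) = A i j" unfolding e using hdeg_mon[of 1] by simp
  qed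
  moreover have "hrank_le 3 M 1" unfolding hrank_le_def
    by (rule exI[of _ "\<lambda>i k. mon 1 (A i i / 2)"], rule exI[of _ "\<lambda>k j. mon 1 (A j j / 2)"])
      (simp add: hsum1 hsum1' hmul_eq M_def)
  ultimately show ?thesis by blast
qed

lemma hrank_le3: "hrank_le 3 M 3"
  unfolding hrank_le_def
proof (rule exI[of _ M], rule exI[of _ "\<lambda>k j. if k = j then 1 else 0"], intro allI impI)
  fix i j :: nat assume "i < 3" "j < 3"
  then have "j = 0 \<or> j = 1 \<or> j = 2" by auto
  then show "M i j = hsum 3 (\<lambda>k. hmul (M i k) (if k = j then 1 else 0))"
    by (elim disjE) (simp_all add: hsum3 hmul_eq)
qed

lemma hrank_prop: "hrank_le 3 M (hrank 3 M)"
  unfolding hrank_def by (rule LeastI[of _ 3]) (rule hrank_le3)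

lemma hrank_min: "hrank_le 3 M r \<Longrightarrow> hrank 3 M \<le> r"
  unfolding hrank_def by (rule Least_le)

lemma sing_empty: "\<not> sym_trop_singular A {} {}"
  unfolding sym_trop_singular_def by (simp add: sym_monomial_def)

lemma lt3_eq: "{..<3::nat} = {0, 1, 2}" by auto

lemma card3_sub: "I \<subseteq> {..<3::nat} \<Longrightarrow> card I = 3 \<Longrightarrow> I = {0, 1, 2}"
  using card_subset_eq[of "{..<3::nat}" I] lt3_eq by simp

lemma card_le3: "I \<subseteq> {..<3::nat} \<Longrightarrow> card I \<le> 3"
  using card_mono[of "{..<3::nat}" I] by simp

lemma trop2:
  "sym_trop_rank 3 A = 2 \<longleftrightarrow>
    (\<exists>I J. I \<subseteq> {..<3} \<and> J \<subseteq> {..<3} \<and> card I = 2 \<and> card J = 2 \<and> \<not> sym_trop_singular A I J) \<and>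
    sym_trop_singular A {0, 1, 2} {0, 1, 2}"
proof -
  define P where "P r \<longleftrightarrow> (\<exists>I J. I \<subseteq> {..<3} \<and> J \<subseteq> {..<3} \<and> card I = r \<and> card J = r \<and>
      \<not> sym_trop_singular A I J)" for r
  have T: "sym_trop_rank 3 A = (GREATEST r. P r)" unfolding sym_trop_rank_def P_def ..
  have bound: "P r \<Longrightarrow> r \<le> 3" for r unfolding P_def using card_le3 by blast
  have P0: "P 0" unfolding P_def using sing_empty
    by (intro exI[of _ "{}"]) auto
  have P3: "P 3 \<longleftrightarrow> \<not> sym_trop_singular A {0, 1, 2} {0, 1, 2}"
  proof
    assume "P 3"
    then obtain I J where "I \<subseteq> {..<3}" "J \<subseteq> {..<3}" "card I = 3" "card J = 3" "\<not> sym_trop_singular A I J"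
      unfolding P_def by blast
    then show "\<not> sym_trop_singular A {0, 1, 2} {0, 1, 2}" using card3_sub by metis
  next
    assume "\<not> sym_trop_singular A {0, 1, 2} {0, 1, 2}"
    then show "P 3" unfolding P_def
      by (intro exI[of _ "{0, 1, 2}"]) (auto simp: lt3_eq)
  qed
  show ?thesis
  proof
    assume h: "sym_trop_rank 3 A = 2"
    have "P (GREATEST r. P r)" by (rule GreatestI_nat[of P 0 3, OF P0 bound])
    then have p2: "P 2" using h T by simp
    have "\<not> P 3"
    proof
      assume "P 3"
      then have "3 \<le> (GREATEST r. P r)" by (rule Greatest_le_nat[of P 3 3, OF _ bound])
      then show False using h T by simp
    qed
    then show "(\<exists>I J. I \<subseteq> {..<3} \<and> J \<subseteq> {..<3} \<and> card I = 2 \<and> card J = 2 \<and> \<not> sym_trop_singular A I J) \<and>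
      sym_trop_singular A {0, 1, 2} {0, 1, 2}" using p2 P3 unfolding P_def by blast
  next
    assume h: "(\<exists>I J. I \<subseteq> {..<3} \<and> J \<subseteq> {..<3} \<and> card I = 2 \<and> card J = 2 \<and> \<not> sym_trop_singular A I J) \<and>
      sym_trop_singular A {0, 1, 2} {0, 1, 2}"
    have "P 2" using h unfolding P_def by blast
    moreover have "P y \<Longrightarrow> y \<le> 2" for y
    proof -
      assume "P y"
      moreover have "y \<noteq> 3" using P3 h \<open>P y\<close> by auto
      ultimately show "y \<le> 2" using bound by fastforce
    qed
    ultimately have "(GREATEST r. P r) = 2" by (intro Greatest_equality) auto
    then show "sym_trop_rank 3 A = 2" using T by simp
  qed
qed

theorem corollary2:
  fixes A :: "nat \<Rightarrow> nat \<Rightarrow> real"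
  assumes "\<forall>i<3. \<forall>j<3. A i j = A j i"
  shows "sym_kapranov_rank 3 A = 2 \<longleftrightarrow> sym_trop_rank 3 A = 2"
proof -
  note s = assms
  have sA: "symA A" using s unfolding symA_def by auto
  define Q where "Q r \<longleftrightarrow> (\<exists>M. sym_lift 3 A M \<and> hrank 3 M = r)" for r
  have K: "sym_kapranov_rank 3 A = (LEAST r. Q r)" unfolding sym_kapranov_rank_def Q_def ..
  define M0 where "M0 i j = mon 1 (A i j)" for i j
  have L0: "sym_lift 3 A M0" unfolding sym_lift_def M0_def
    using s hdeg_mon[of 1] by (auto simp: hzero_eq)
  have QK: "Q (LEAST r. Q r)" by (rule LeastI[of _ "hrank 3 M0"]) (use L0 in \<open>auto simp: Q_def\<close>)
  have low: "sym_trop_singular A I J"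
    if "sym_lift 3 A M" "hrank 3 M \<le> 1" "I \<subseteq> {..<3}" "J \<subseteq> {..<3}" "card I = 2" "card J = 2" for M I J
  proof (cases "hrank 3 M = 0")
    case True
    then have "hrank_le 3 M 0" using hrank_prop[of M] by simp
    then show ?thesis using rank0_false that(1) by blast
  next
    case False
    then have "hrank_le 3 M 1" using hrank_prop[of M] that(2) by (metis le_neq_implies_less less_one)
    then show ?thesis using rank1_sing that by blast
  qed
  show ?thesis
  proof
    assume h: "sym_kapranov_rank 3 A = 2"
    then obtain M where M: "sym_lift 3 A M" "hrank 3 M = 2" using QK K unfolding Q_def by auto
    have "hrank_le 3 M 2" using hrank_prop[of M] M(2) by simp
    then have "tie3 A" using rank2_tie M(1) by blast
    then have sg3: "sym_trop_singular A {0, 1, 2} {0, 1, 2}" using sing3_iff[OF sA] by simp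
    have ex2: "\<exists>I J. I \<subseteq> {..<3} \<and> J \<subseteq> {..<3} \<and> card I = 2 \<and> card J = 2 \<and> \<not> sym_trop_singular A I J"
    proof (rule ccontr)
      assume "\<not> ?thesis"
      then have all: "sym_trop_singular A I J" if "I \<subseteq> {..<3}" "J \<subseteq> {..<3}" "card I = 2" "card J = 2" for I J
        using that by blast
      have "\<forall>i<3. \<forall>j<3. i \<noteq> j \<longrightarrow> A i i + A j j = A i j + A j i"
      proof (intro allI impI)
        fix i j :: nat assume ij: "i < 3" "j < 3" "i \<noteq> j"
        have "{i, j} \<subseteq> {..<3}" "card {i, j} = 2" using ij by auto
        then have "sym_trop_singular A {i, j} {i, j}" using all by blast
        then show "A i i + A j j = A i j + A j i" using sing2_principal ij(3) by blast
      qed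
      then obtain M1 where M1: "sym_lift 3 A M1" "hrank_le 3 M1 1" using principal_rank1[OF s] by blast
      have "hrank 3 M1 \<le> 1" using hrank_min[OF M1(2)] .
      moreover have "Q (hrank 3 M1)" unfolding Q_def using M1(1) by blast
      then have "(LEAST r. Q r) \<le> hrank 3 M1" by (rule Least_le)
      ultimately show False using h K by simp
    qed
    show "sym_trop_rank 3 A = 2" unfolding trop2 using ex2 sg3 by blast
  next
    assume h: "sym_trop_rank 3 A = 2"
    then obtain I J where IJ: "I \<subseteq> {..<3}" "J \<subseteq> {..<3}" "card I = 2" "card J = 2" "\<not> sym_trop_singular A I J"
      and sg3: "sym_trop_singular A {0, 1, 2} {0, 1, 2}" unfolding trop2 by blast
    obtain M where M: "sym_lift 3 A M" "hrank_le 3 M 2" using sing3_lift[OF s sg3] by blast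
    have ge: "2 \<le> hrank 3 M'" if "sym_lift 3 A M'" for M'
    proof (rule ccontr)
      assume "\<not> 2 \<le> hrank 3 M'"
      then have "hrank 3 M' \<le> 1" by simp
      then show False using low[OF that _ IJ(1-4)] IJ(5) by blast
    qed
    have "hrank 3 M = 2" using hrank_min[OF M(2)] ge[OF M(1)] by simp
    then have Q2: "Q 2" unfolding Q_def using M(1) by blast
    have "(LEAST r. Q r) = 2"
    proof (rule Least_equality[of Q 2, OF Q2])
      fix y assume "Q y"
      then show "2 \<le> y" unfolding Q_def using ge by blast
    qed
    then show "sym_kapranov_rank 3 A = 2" using K by simp
  qed
qed

end
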